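(* Let $\mathbb G$ be a Carnot group and $j\in\{1,\dots,n_1\}$. Then (1) $\mathrm{Pr}_j(\delta_rx)=\delta_r\mathrm{Pr}_j(x)$ for all $x\in\mathbb G$, $r>0$; (2) for all $x,y\in\mathbb G$, $\mathrm{Pr}_j(x\cdot y)=\mathrm{Pr}_j(x)\cdot\exp(x_jX_j)\cdot\mathrm{Pr}_j(y)\cdot\exp(-x_jX_j)$.
   Context: $\mathbb{G}$ is a Carnot group: Lie algebra $\mathfrak{g}=V_1\oplus\dots\oplus V_m$ of left-invariant vector fields with $[V_1,V_k]=V_{k+1}$ ($V_{m+1}=\{0\}$), $n_1=\dim V_1$; basis $X_1,\dots,X_N$ ordered by degree, each $V_k$ spanned by a subcollection, $\sigma_i=k$ if $X_i\in V_k$; points identified with canonical coordinates $(x_1,\dots,x_N)=\exp(\sum x_iX_i)(e)$; dilations $\delta_r(x)=(r^{\sigma_i}x_i)_i$. $\Pi_j=\{x:x_j=0\}$; every $x$ is uniquely $x=p\exp(x_jX_j)$ with $p\in\Pi_j$, and $\mathrm{Pr}_j(x):=p$. *)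

theory Defs
  imports "HOL-Analysis.Analysis"
begin

text \<open>The Lie algebra
  g = V_1 + ... + V_m is identified with real^'n via the basis X_i = axis i 1;
  sigma i is the degree of X_i; br is the Lie bracket in these coordinates.
  Since the coordinates are canonical of the first kind, exp is the identity and
  the group law is the Baker-Campbell-Hausdorff (Dynkin) series, which is a finite
  sum because the algebra is nilpotent of step m.\<close>

definition stratum :: "('n::finite \<Rightarrow> nat) \<Rightarrow> nat \<Rightarrow> (real^'n) set" where
  "stratum \<sigma> k = span {axis i 1 | i. \<sigma> i = k}"

definition carnot_step :: "('n::finite \<Rightarrow> nat) \<Rightarrow> nat" where
  "carnot_step \<sigma> = Max (range \<sigma>)"

definition stratified_lie_algebra ::
  "(real^'n \<Rightarrow> real^'n \<Rightarrow> real^'n) \<Rightarrow> ('n::finite \<Rightarrow> nat) \<Rightarrow> bool" where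
  "stratified_lie_algebra br \<sigma> \<longleftrightarrow>
     bilinear br \<and>
     (\<forall>x. br x x = 0) \<and>
     (\<forall>x y z. br x (br y z) + br y (br z x) + br z (br x y) = 0) \<and>
     (\<forall>i. 1 \<le> \<sigma> i) \<and>
     (\<forall>k\<ge>1. span {br u v | u v. u \<in> stratum \<sigma> 1 \<and> v \<in> stratum \<sigma> k}
              = stratum \<sigma> (k + 1))"

fun nested_bracket ::
  "(real^'n \<Rightarrow> real^'n \<Rightarrow> real^'n) \<Rightarrow> real^'n \<Rightarrow> real^'n \<Rightarrow> bool list \<Rightarrow> real^'n" where
  "nested_bracket br X Y [] = 0"
| "nested_bracket br X Y [a] = (if a then X else Y)"
| "nested_bracket br X Y (a # b # w) =
     br (if a then X else Y) (nested_bracket br X Y (b # w))"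

definition dynkin_word :: "(nat \<times> nat) list \<Rightarrow> bool list" where
  "dynkin_word rs = concat (map (\<lambda>(r, s). replicate r True @ replicate s False) rs)"

text \<open>Dynkin's form of the BCH series, truncated at order m (all omitted terms
  are brackets of length > m, hence vanish in a step-m nilpotent algebra).\<close>
definition bch ::
  "(real^'n \<Rightarrow> real^'n \<Rightarrow> real^'n) \<Rightarrow> nat \<Rightarrow> real^'n \<Rightarrow> real^'n \<Rightarrow> real^'n" where
  "bch br m X Y =
     (\<Sum>n\<in>{1..m}. ((-1) ^ (n - 1) / real n) *\<^sub>R
        (\<Sum>rs\<in>{rs. length rs = n \<and> set rs \<subseteq> ({0..m} \<times> {0..m}) - {(0, 0)}}.
           (1 / (real (sum_list (map (\<lambda>(r, s). r + s) rs)) *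
                 prod_list (map (\<lambda>(r, s). fact r * fact s) rs))) *\<^sub>R
           nested_bracket br X Y (dynkin_word rs)))"

text \<open>The group law x \<cdot> y = exp^{-1}(exp(x) exp(y)) in exponential coordinates.\<close>
definition carnot_mult ::
  "(real^'n \<Rightarrow> real^'n \<Rightarrow> real^'n) \<Rightarrow> ('n::finite \<Rightarrow> nat) \<Rightarrow> real^'n \<Rightarrow> real^'n \<Rightarrow> real^'n" where
  "carnot_mult br \<sigma> x y = bch br (carnot_step \<sigma>) x y"

definition exp_dir :: "'n::finite \<Rightarrow> real \<Rightarrow> real^'n" where
  "exp_dir j t = t *\<^sub>R axis j 1"

definition dil :: "('n::finite \<Rightarrow> nat) \<Rightarrow> real \<Rightarrow> real^'n \<Rightarrow> real^'n" where
  "dil \<sigma> r x = (\<chi> i. r ^ \<sigma> i * x $ i)"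

definition Pi_plane :: "'n::finite \<Rightarrow> (real^'n) set" where
  "Pi_plane j = {x. x $ j = 0}"

definition Pr ::
  "(real^'n \<Rightarrow> real^'n \<Rightarrow> real^'n) \<Rightarrow> ('n::finite \<Rightarrow> nat) \<Rightarrow> 'n \<Rightarrow> real^'n \<Rightarrow> real^'n" where
  "Pr br \<sigma> j x = (THE p. p \<in> Pi_plane j \<and> x = carnot_mult br \<sigma> p (exp_dir j (x $ j)))"

end

theory Submission
  imports Defs "HOL-Computational_Algebra.Formal_Power_Series"
begin

class gmon = monoid_add +
  fixes gdeg :: "'a \<Rightarrow> nat"
  assumes gdeg_add: "gdeg (a + b) = gdeg a + gdeg b"
    and gdeg_0: "gdeg a = 0 \<longleftrightarrow> a = 0"
    and fin_split: "finite {p. fst p + snd p = w}"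

instantiation list :: (type) monoid_add
begin
definition zero_list_def: "(0::'a list) = []"
definition plus_list_def: "(u::'a list) + v = u @ v"
instance
proof
  fix a b c :: "'a list"
  show "a + b + c = a + (b + c)" by (simp add: plus_list_def)
  show "0 + a = a" by (simp add: plus_list_def zero_list_def)
  show "a + 0 = a" by (simp add: plus_list_def zero_list_def)
qed
end

lemma list_splits_eq: "{p. fst p + snd p = (w::'a list)} = (\<lambda>i. (take i w, drop i w)) ` {0..length w}"
proof (rule set_eqI)
  fix p :: "'a list \<times> 'a list"
  show "p \<in> {p. fst p + snd p = w} \<longleftrightarrow> p \<in> (\<lambda>i. (take i w, drop i w)) ` {0..length w}"
  proof
    assume "p \<in> {p. fst p + snd p = w}"
    then have "w = fst p @ snd p" by (simp add: plus_list_def)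
    then show "p \<in> (\<lambda>i. (take i w, drop i w)) ` {0..length w}"
      by (intro image_eqI[where x="length (fst p)"]) auto
  qed (auto simp: plus_list_def)
qed

instantiation list :: (type) gmon
begin
definition gdeg_list_def: "gdeg (w::'a list) = length w"
instance
proof
  fix a b :: "'a list"
  show "gdeg (a + b) = gdeg a + gdeg b" by (simp add: gdeg_list_def plus_list_def)
  show "(gdeg a = 0) = (a = 0)" by (simp add: gdeg_list_def zero_list_def)
next
  fix w :: "'a list"
  show "finite {p. fst p + snd p = w}" unfolding list_splits_eq by simp
qed
end

instantiation prod :: (gmon, gmon) gmon
begin
definition gdeg_prod_def: "gdeg (p::'a \<times> 'b) = gdeg (fst p) + gdeg (snd p)"
instance
proof
  fix a b :: "'a \<times> 'b"
  show "gdeg (a + b) = gdeg a + gdeg b"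
    by (cases a; cases b) (simp add: gdeg_prod_def gdeg_add)
  show "(gdeg a = 0) = (a = 0)"
    by (cases a) (simp add: gdeg_prod_def gdeg_0 zero_prod_def)
next
  fix w :: "'a \<times> 'b"
  have "{p. fst p + snd p = w} \<subseteq> (\<lambda>(x,y). ((fst x, fst y), (snd x, snd y))) `
          ({p. fst p + snd p = fst w} \<times> {p. fst p + snd p = snd w})"
  proof
    fix p :: "('a \<times> 'b) \<times> ('a \<times> 'b)" assume "p \<in> {p. fst p + snd p = w}"
    then show "p \<in> (\<lambda>(x,y). ((fst x, fst y), (snd x, snd y))) `
          ({p. fst p + snd p = fst w} \<times> {p. fst p + snd p = snd w})"
      by (cases p; cases w) (auto simp: image_iff plus_prod_def intro!: bexI[where x="((fst (fst p), fst (snd p)), (snd (fst p), snd (snd p)))"])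
  qed
  then show "finite {p. fst p + snd p = w}"
    by (rule finite_subset) (intro finite_imageI finite_cartesian_product fin_split)
qed
end

lemma gdeg_zero [simp]: "gdeg (0::'a::gmon) = 0" by (simp add: gdeg_0)

definition spl :: "'a::gmon \<Rightarrow> ('a \<times> 'a) set" where
  "spl w = {p. fst p + snd p = w}"

lemma finite_spl [simp]: "finite (spl w)" by (simp add: spl_def fin_split)

lemma mem_spl [simp]: "(p \<in> spl w) \<longleftrightarrow> fst p + snd p = w" by (simp add: spl_def)

datatype 'm ser = Ser (coef: "'m \<Rightarrow> real")

lemma ser_eqI: "(\<And>w. coef f w = coef g w) \<Longrightarrow> f = g"
  by (cases f; cases g) auto

instantiation ser :: (gmon) real_algebra_1
begin
definition "0 = Ser (\<lambda>_. 0)"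
definition "1 = Ser (\<lambda>w. if w = 0 then 1 else 0)"
definition "f + g = Ser (\<lambda>w. coef f w + coef g w)"
definition "f - g = Ser (\<lambda>w. coef f w - coef g w)"
definition "- f = Ser (\<lambda>w. - coef f w)"
definition "scaleR c f = Ser (\<lambda>w. c * coef f w)"
definition "f * g = Ser (\<lambda>w. \<Sum>p\<in>spl w. coef f (fst p) * coef g (snd p))"

lemma coef_simps [simp]:
  "coef 0 w = 0" "coef 1 w = (if w = 0 then 1 else 0)"
  "coef (f + g) w = coef f w + coef g w"  "coef (f - g) w = coef f w - coef g w"
  "coef (- f) w = - coef f w" "coef (scaleR c f) w = c * coef f w"
  by (simp_all add: zero_ser_def one_ser_def plus_ser_def minus_ser_def uminus_ser_def scaleR_ser_def)

lemma coef_mult: "coef (f * g) w = (\<Sum>p\<in>spl w. coef f (fst p) * coef g (snd p))"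
  by (simp add: times_ser_def)

lemma one_mult_aux: "(\<Sum>p\<in>spl w. (if fst p = 0 then 1 else 0) * h (snd p)) = (h w :: real)"
proof -
  have "(\<Sum>p\<in>spl w. (if fst p = 0 then 1 else 0) * h (snd p)) = (\<Sum>p\<in>spl w. if p = (0, w) then h w else 0)"
    by (rule sum.cong) auto
  also have "\<dots> = h w" by (simp add: sum.delta')
  finally show ?thesis .
qed

lemma mult_one_aux: "(\<Sum>p\<in>spl w. h (fst p) * (if snd p = 0 then 1 else 0)) = (h w :: real)"
proof -
  have "(\<Sum>p\<in>spl w. h (fst p) * (if snd p = 0 then 1 else 0)) = (\<Sum>p\<in>spl w. if p = (w, 0) then h w else 0)"
    by (rule sum.cong) auto
  also have "\<dots> = h w" by (simp add: sum.delta')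
  finally show ?thesis .
qed

lemma assoc_aux:
  "(\<Sum>p\<in>spl w. (\<Sum>q\<in>spl (fst p). F (fst q) (snd q) (snd p))) =
   (\<Sum>p\<in>spl w. (\<Sum>q\<in>spl (snd p). F (fst p) (fst q) (snd q)))"
proof -
  have "(\<Sum>p\<in>spl w. (\<Sum>q\<in>spl (fst p). F (fst q) (snd q) (snd p))) =
        (\<Sum>z\<in>Sigma (spl w) (\<lambda>p. spl (fst p)). F (fst (snd z)) (snd (snd z)) (snd (fst z)))"
    by (subst sum.Sigma) (auto simp: split_beta)
  also have "\<dots> = (\<Sum>z\<in>Sigma (spl w) (\<lambda>p. spl (snd p)). F (fst (fst z)) (fst (snd z)) (snd (snd z)))"
    by (rule sum.reindex_bij_witness[where i="\<lambda>z. ((fst (fst z) + fst (snd z), snd (snd z)), (fst (fst z), fst (snd z)))"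
          and j="\<lambda>z. ((fst (snd z), snd (snd z) + snd (fst z)), (snd (snd z), snd (fst z)))"])
       (auto simp: add.assoc)
  also have "\<dots> = (\<Sum>p\<in>spl w. (\<Sum>q\<in>spl (snd p). F (fst p) (fst q) (snd q)))"
    by (subst sum.Sigma) (auto simp: split_beta)
  finally show ?thesis .
qed

instance
proof
  fix a b c :: "'a ser" and r s :: real
  show "a * b * c = a * (b * c)"
    by (rule ser_eqI) (simp add: coef_mult sum_distrib_left sum_distrib_right mult.assoc
          assoc_aux[where F="\<lambda>x y z. coef a x * (coef b y * coef c z)"])
  show "1 * a = a" by (rule ser_eqI) (simp add: coef_mult one_mult_aux)
  show "a * 1 = a" by (rule ser_eqI) (simp add: coef_mult mult_one_aux)
  show "(a + b) * c = a * c + b * c" by (rule ser_eqI) (simp add: coef_mult algebra_simps sum.distrib)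
  show "a * (b + c) = a * b + a * c" by (rule ser_eqI) (simp add: coef_mult algebra_simps sum.distrib)
  show "(0::'a ser) \<noteq> 1" by (metis coef_simps(1,2) zero_neq_one)
  show "a + b + c = a + (b + c)" by (rule ser_eqI) simp
  show "a + b = b + a" by (rule ser_eqI) simp
  show "0 + a = a" by (rule ser_eqI) simp
  show "- a + a = 0" by (rule ser_eqI) simp
  show "a - b = a + - b" by (rule ser_eqI) simp
  show "scaleR r (a + b) = scaleR r a + scaleR r b" by (rule ser_eqI) (simp add: algebra_simps)
  show "scaleR (r + s) a = scaleR r a + scaleR s a" by (rule ser_eqI) (simp add: algebra_simps)
  show "scaleR r (scaleR s a) = scaleR (r * s) a" by (rule ser_eqI) simp
  show "scaleR 1 a = a" by (rule ser_eqI) simp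
  show "scaleR r a * b = scaleR r (a * b)" by (rule ser_eqI) (simp add: coef_mult sum_distrib_left mult.assoc)
  show "a * scaleR r b = scaleR r (a * b)" by (rule ser_eqI) (simp add: coef_mult sum_distrib_left algebra_simps)
qed
end

definition ordge :: "'a::gmon ser \<Rightarrow> nat \<Rightarrow> bool" where
  "ordge f k \<longleftrightarrow> (\<forall>w. gdeg w < k \<longrightarrow> coef f w = 0)"

lemma ordgeD: "ordge f k \<Longrightarrow> gdeg w < k \<Longrightarrow> coef f w = 0"
  by (simp add: ordge_def)

lemma ordge_0 [simp]: "ordge f 0" by (simp add: ordge_def)

lemma ordge_1: "ordge f 1 \<longleftrightarrow> coef f 0 = 0"
  by (auto simp: ordge_def gdeg_0)

lemma ordge_mult:
  assumes "ordge f i" "ordge g j" shows "ordge (f * g) (i + j)"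
  unfolding ordge_def
proof (intro allI impI)
  fix w :: 'a assume w: "gdeg w < i + j"
  have "coef f (fst p) * coef g (snd p) = 0" if "p \<in> spl w" for p
  proof -
    from that have "gdeg (fst p) + gdeg (snd p) = gdeg w" by (simp add: gdeg_add[symmetric])
    with w have "gdeg (fst p) < i \<or> gdeg (snd p) < j" by linarith
    then show ?thesis using assms by (auto simp: ordge_def)
  qed
  then show "coef (f * g) w = 0" by (auto simp: coef_mult intro!: sum.neutral)
qed

lemma ordge_power: "ordge f 1 \<Longrightarrow> ordge (f ^ k) k"
proof (induct k)
  case 0 then show ?case by simp
next
  case (Suc k) then show ?case using ordge_mult[of f 1 "f^k" k] by simp
qed

lemma ordge_add: "ordge f k \<Longrightarrow> ordge g k \<Longrightarrow> ordge (f + g) k"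
  by (simp add: ordge_def)

lemma ordge_scaleR: "ordge f k \<Longrightarrow> ordge (c *\<^sub>R f) k"
  by (simp add: ordge_def)

lemma ordge_mono: "ordge f k \<Longrightarrow> j \<le> k \<Longrightarrow> ordge f j"
  by (simp add: ordge_def)

lemma coef_power_low: "ordge f 1 \<Longrightarrow> gdeg w < k \<Longrightarrow> coef (f ^ k) w = 0"
  using ordge_power ordgeD by blast

definition evf :: "'a::gmon ser \<Rightarrow> real fps \<Rightarrow> 'a ser" where
  "evf a F = Ser (\<lambda>w. \<Sum>k\<le>gdeg w. fps_nth F k * coef (a ^ k) w)"

lemma coef_evf: "coef (evf a F) w = (\<Sum>k\<le>gdeg w. fps_nth F k * coef (a ^ k) w)"
  by (simp add: evf_def)

lemma coef_evf_ext:
  assumes "ordge a 1" "gdeg w \<le> N"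
  shows "coef (evf a F) w = (\<Sum>k\<le>N. fps_nth F k * coef (a ^ k) w)"
  unfolding coef_evf
  by (rule sum.mono_neutral_left) (use assms coef_power_low[OF assms(1)] in \<open>auto simp: not_le\<close>)

lemma evf_add: "evf a (F + G) = evf a F + evf a G"
  by (rule ser_eqI) (simp add: coef_evf algebra_simps sum.distrib)

lemma evf_diff: "evf a (F - G) = evf a F - evf a G"
  by (rule ser_eqI) (simp add: coef_evf algebra_simps sum_subtractf)

lemma evf_1: "evf a 1 = 1"
  by (rule ser_eqI) (auto simp: coef_evf gdeg_0 sum.atMost_shift)

lemma evf_X: "ordge a 1 \<Longrightarrow> evf a fps_X = a"
proof (rule ser_eqI)
  fix w assume a: "ordge a 1"
  show "coef (evf a fps_X) w = coef a w"
  proof (cases "gdeg w = 0")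
    case True then show ?thesis using ordgeD[OF a, of 0] by (simp add: coef_evf gdeg_0)
  next
    case False
    then have "coef (evf a fps_X) w = (\<Sum>k\<le>gdeg w. if k = 1 then coef a w else 0)"
      unfolding coef_evf by (intro sum.cong) (auto simp: fps_X_def)
    also have "\<dots> = coef a w" using False by (simp add: sum.delta)
    finally show ?thesis .
  qed
qed

lemma sum_sq_triangle:
  fixes h :: "nat \<Rightarrow> nat \<Rightarrow> real"
  assumes "\<And>i j. i \<le> d \<Longrightarrow> j \<le> d \<Longrightarrow> d < i + j \<Longrightarrow> h i j = 0"
  shows "(\<Sum>i\<le>d. \<Sum>j\<le>d. h i j) = (\<Sum>k\<le>d. \<Sum>i\<le>k. h i (k - i))"
proof -
  have "(\<Sum>i\<le>d. \<Sum>j\<le>d. h i j) = (\<Sum>(i,j)\<in>{..d} \<times> {..d}. h i j)"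
    by (simp add: sum.cartesian_product)
  also have "\<dots> = (\<Sum>(i,j)\<in>{(i,j). i + j \<le> d}. h i j)"
    by (rule sum.mono_neutral_right) (auto, metis assms not_le)
  also have "\<dots> = (\<Sum>k\<le>d. \<Sum>i\<le>k. h i (k - i))"
    by (rule sum.triangle_reindex_eq)
  finally show ?thesis .
qed

lemma coef_evf_mult:
  assumes a: "ordge a 1" and b: "ordge b 1"
  shows "coef (evf a F * evf b G) w =
    (\<Sum>i\<le>gdeg w. \<Sum>j\<le>gdeg w. fps_nth F i * fps_nth G j * coef (a ^ i * b ^ j) w)"
proof -
  have "coef (evf a F * evf b G) w =
     (\<Sum>p\<in>spl w. (\<Sum>i\<le>gdeg w. fps_nth F i * coef (a ^ i) (fst p)) * (\<Sum>j\<le>gdeg w. fps_nth G j * coef (b ^ j) (snd p)))"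
    unfolding coef_mult
  proof (rule sum.cong[OF refl])
    fix p assume "p \<in> spl w"
    then have "gdeg (fst p) \<le> gdeg w" "gdeg (snd p) \<le> gdeg w"
      by (auto simp: gdeg_add)
    then show "coef (evf a F) (fst p) * coef (evf b G) (snd p) =
      (\<Sum>i\<le>gdeg w. fps_nth F i * coef (a ^ i) (fst p)) * (\<Sum>j\<le>gdeg w. fps_nth G j * coef (b ^ j) (snd p))"
      using coef_evf_ext[OF a] coef_evf_ext[OF b] by simp
  qed
  also have "\<dots> = (\<Sum>i\<le>gdeg w. \<Sum>j\<le>gdeg w. fps_nth F i * fps_nth G j * coef (a ^ i * b ^ j) w)"
    by (simp add: coef_mult sum_distrib_left sum_distrib_right algebra_simps sum.swap[of _ "spl w"])
       (rule sum.cong[OF refl], rule sum.swap)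
  finally show ?thesis .
qed

lemma evf_mult:
  fixes a :: "'a::gmon ser"
  assumes a: "ordge a 1"
  shows "evf a (F * G) = evf a F * evf a G"
proof (rule ser_eqI)
  fix w :: 'a
  let ?d = "gdeg w"
  have "coef (evf a F * evf a G) w = (\<Sum>i\<le>?d. \<Sum>j\<le>?d. fps_nth F i * fps_nth G j * coef (a ^ (i + j)) w)"
    by (simp add: coef_evf_mult[OF a a] power_add)
  also have "\<dots> = (\<Sum>k\<le>?d. \<Sum>i\<le>k. fps_nth F i * fps_nth G (k - i) * coef (a ^ (i + (k - i))) w)"
    by (rule sum_sq_triangle) (use coef_power_low[OF a] in auto)
  also have "\<dots> = (\<Sum>k\<le>?d. (\<Sum>i\<le>k. fps_nth F i * fps_nth G (k - i)) * coef (a ^ k) w)"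
    by (simp add: sum_distrib_right)
  also have "\<dots> = coef (evf a (F * G)) w"
    by (simp add: coef_evf fps_mult_nth atLeast0AtMost)
  finally show "coef (evf a (F * G)) w = coef (evf a F * evf a G) w" by simp
qed

lemma evf_power: "ordge a 1 \<Longrightarrow> evf a (F ^ k) = evf a F ^ k"
  by (induct k) (simp_all add: evf_1 evf_mult)

lemma evf_const: "evf a (fps_const c) = c *\<^sub>R 1"
  by (rule ser_eqI) (auto simp: coef_evf gdeg_0 sum.atMost_shift)

lemma ordge_evf: "fps_nth F 0 = 0 \<Longrightarrow> ordge (evf a F) 1"
  unfolding ordge_def by (auto simp: coef_evf gdeg_0)

lemma evf_compose:
  fixes a :: "'a::gmon ser"
  assumes a: "ordge a 1" and G0: "fps_nth G 0 = 0"
  shows "evf (evf a G) F = evf a (F oo G)"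
proof (rule ser_eqI)
  fix w :: 'a
  let ?d = "gdeg w"
  have b: "ordge (evf a G) 1" using G0 by (rule ordge_evf)
  have "coef (evf (evf a G) F) w = (\<Sum>k\<le>?d. fps_nth F k * coef (evf a (G ^ k)) w)"
    by (simp add: coef_evf evf_power[OF a])
  also have "\<dots> = (\<Sum>k\<le>?d. \<Sum>j\<le>?d. fps_nth F k * (fps_nth (G ^ k) j * coef (a ^ j) w))"
    by (simp add: coef_evf sum_distrib_left)
  also have "\<dots> = (\<Sum>j\<le>?d. (\<Sum>k\<le>j. fps_nth F k * fps_nth (G ^ k) j) * coef (a ^ j) w)"
  proof -
    have "(\<Sum>k\<le>?d. \<Sum>j\<le>?d. fps_nth F k * (fps_nth (G ^ k) j * coef (a ^ j) w)) =
          (\<Sum>j\<le>?d. \<Sum>k\<le>?d. fps_nth F k * (fps_nth (G ^ k) j * coef (a ^ j) w))"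
      by (rule sum.swap)
    also have "\<dots> = (\<Sum>j\<le>?d. \<Sum>k\<le>j. fps_nth F k * (fps_nth (G ^ k) j * coef (a ^ j) w))"
    proof (rule sum.cong[OF refl])
      fix j assume "j \<in> {..?d}"
      then show "(\<Sum>k\<le>?d. fps_nth F k * (fps_nth (G ^ k) j * coef (a ^ j) w)) =
            (\<Sum>k\<le>j. fps_nth F k * (fps_nth (G ^ k) j * coef (a ^ j) w))"
        by (intro sum.mono_neutral_right) (auto simp: startsby_zero_power_prefix[OF G0])
    qed
    finally show ?thesis by (simp add: sum_distrib_right mult.assoc)
  qed
  also have "\<dots> = coef (evf a (F oo G)) w"
    by (simp add: coef_evf fps_compose_nth atLeast0AtMost)
  finally show "coef (evf (evf a G) F) w = coef (evf a (F oo G)) w" .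
qed

definition exps :: "'a::gmon ser \<Rightarrow> 'a ser" where "exps a = evf a (fps_exp 1)"
definition lns :: "'a::gmon ser \<Rightarrow> 'a ser" where "lns a = evf a (fps_ln 1)"

lemma exp_ln_fps: "fps_exp (1::real) oo fps_ln 1 = fps_X + 1"
proof -
  have "(fps_exp (1::real) - 1) oo fps_ln 1 = fps_X"
    using fps_inv_fps_exp_compose(2)[of "1::real"] fps_ln_fps_exp_inv[of "1::real"] by simp
  have "fps_exp (1::real) oo fps_ln 1 = ((fps_exp 1 - 1) + 1) oo fps_ln 1" by simp
  also have "\<dots> = ((fps_exp 1 - 1) oo fps_ln 1) + (1 oo fps_ln 1)"
    by (rule fps_compose_add_distrib)
  finally show ?thesis using \<open>(fps_exp (1::real) - 1) oo fps_ln 1 = fps_X\<close> by simp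
qed

lemma ln_exp_fps: "fps_ln (1::real) oo (fps_exp 1 - 1) = fps_X"
  using fps_inv_fps_exp_compose(1)[of "1::real"] fps_ln_fps_exp_inv[of "1::real"] by simp

lemma exps_lns: "ordge a 1 \<Longrightarrow> exps (lns a) = 1 + a"
  unfolding exps_def lns_def
  by (simp add: evf_compose exp_ln_fps evf_add evf_X evf_1)

lemma exps_minus_1: "exps a - 1 = evf a (fps_exp 1 - 1)"
  by (simp add: exps_def evf_diff evf_1)

lemma lns_exps: "ordge a 1 \<Longrightarrow> lns (exps a - 1) = a"
  unfolding exps_minus_1 lns_def
  by (simp add: evf_compose ln_exp_fps evf_X)

lemma ordge_exps_minus_1: "ordge (exps a - 1) 1"
  unfolding exps_minus_1 by (rule ordge_evf) simp

lemma ordge_lns: "ordge (lns a) 1"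
  unfolding lns_def by (rule ordge_evf) simp

lemma comm_binom:
  fixes a b :: "'a::ring_1"
  assumes ab: "a * b = b * a"
  shows "(a + b)^n = (\<Sum>k\<le>n. of_nat (n choose k) * a^k * b^(n-k))"
proof (induct n)
  case 0
  then show ?case by simp
next
  case (Suc n)
  have bak: "b * a^k = a^k * b" for k
    using power_commuting_commutes[OF ab, of k] by simp
  have decomp: "{0..n+1} = {0} \<union> {n + 1} \<union> {1..n}" and decomp2: "{0..n} = {0} \<union> {1..n}"
    by auto
  have "(a + b)^(n+1) = (a + b) * (\<Sum>k\<le>n. of_nat (n choose k) * a^k * b^(n - k))"
    using Suc.hyps by simp
  also have "\<dots> = a * (\<Sum>k\<le>n. of_nat (n choose k) * a^k * b^(n-k)) +
      b * (\<Sum>k\<le>n. of_nat (n choose k) * a^k * b^(n-k))"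
    by (rule distrib_right)
  also have "\<dots> = (\<Sum>k\<le>n. of_nat (n choose k) * a^(k+1) * b^(n-k)) +
      (\<Sum>k\<le>n. of_nat (n choose k) * a^k * b^(n - k + 1))"
  proof -
    have "a * (of_nat c * a^k * b^m) = of_nat c * a^(k+1) * b^m" for c k m
    proof -
      have "a * (of_nat c * (a^k * b^m)) = (a * of_nat c) * (a^k * b^m)" by (simp add: mult.assoc)
      also have "\<dots> = of_nat c * (a * (a^k * b^m))" by (simp add: mult_of_nat_commute mult.assoc)
      finally show ?thesis by (simp add: mult.assoc)
    qed
    moreover have "b * (of_nat c * a^k * b^m) = of_nat c * a^k * b^(m+1)" for c k m
    proof -
      have "b * (of_nat c * (a^k * b^m)) = (b * of_nat c) * (a^k * b^m)" by (simp add: mult.assoc)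
      also have "\<dots> = of_nat c * ((b * a^k) * b^m)" by (simp add: mult_of_nat_commute mult.assoc)
      also have "\<dots> = of_nat c * (a^k * (b * b^m))" by (simp add: bak mult.assoc)
      finally show ?thesis by (simp add: mult.assoc)
    qed
    ultimately show ?thesis by (simp add: sum_distrib_left)
  qed
  also have "\<dots> = (\<Sum>k\<le>n. of_nat (n choose k) * a^k * b^(n + 1 - k)) +
      (\<Sum>k=1..n+1. of_nat (n choose (k - 1)) * a^k * b^(n + 1 - k))"
    by (simp add: atMost_atLeast0 sum.shift_bounds_cl_Suc_ivl Suc_diff_le field_simps del: sum.cl_ivl_Suc)
  also have "\<dots> = b^(n + 1) +
      (\<Sum>k=1..n. of_nat (n choose k) * a^k * b^(n + 1 - k)) + (a^(n + 1) +
      (\<Sum>k=1..n. of_nat (n choose (k - 1)) * a^k * b^(n + 1 - k)))"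
      using sum.nat_ivl_Suc' [of 1 n "\<lambda>k. of_nat (n choose (k-1)) * a ^ k * b ^ (n + 1 - k)"]
    by (simp add: sum.atLeast_Suc_atMost atMost_atLeast0)
  also have "\<dots> = a^(n + 1) + b^(n + 1) +
      (\<Sum>k=1..n. of_nat (n + 1 choose k) * a^k * b^(n + 1 - k))"
    by (auto simp add: algebra_simps sum.distrib [symmetric] choose_reduce_nat)
  also have "\<dots> = (\<Sum>k\<le>n+1. of_nat (n + 1 choose k) * a^k * b^(n + 1 - k))"
    using decomp by (simp add: atMost_atLeast0 algebra_simps)
  finally show ?case
    by simp
qed

lemma coef_sum: "finite A \<Longrightarrow> coef (sum f A) w = (\<Sum>x\<in>A. coef (f x) w)"
  by (induct A rule: finite_induct) auto

lemma coef_sum': "coef (sum f A) w = (\<Sum>x\<in>A. coef (f x) w)"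
  by (cases "finite A") (auto simp: coef_sum)

lemma of_nat_ser: "(of_nat c :: 'a::gmon ser) = real c *\<^sub>R 1"
  by (simp add: of_real_def[symmetric])

lemma exps_add:
  fixes a b :: "'a::gmon ser"
  assumes a: "ordge a 1" and b: "ordge b 1" and ab: "a * b = b * a"
  shows "exps (a + b) = exps a * exps b"
proof (rule ser_eqI)
  fix w :: 'a
  let ?d = "gdeg w"
  have ab1: "ordge (a + b) 1" using a b by (rule ordge_add)
  have low: "coef (a ^ i * b ^ j) w = 0" if "?d < i + j" for i j
    using ordge_mult[OF ordge_power[OF a, of i] ordge_power[OF b, of j]] that ordgeD by blast
  have "coef (exps a * exps b) w = (\<Sum>i\<le>?d. \<Sum>j\<le>?d. coef (a ^ i * b ^ j) w / (fact i * fact j))"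
    unfolding exps_def coef_evf_mult[OF a b] by (simp add: field_simps)
  also have "\<dots> = (\<Sum>k\<le>?d. \<Sum>i\<le>k. coef (a ^ i * b ^ (k - i)) w / (fact i * fact (k - i)))"
    by (rule sum_sq_triangle) (simp add: low)
  also have "\<dots> = (\<Sum>k\<le>?d. coef ((a + b) ^ k) w / fact k)"
  proof (rule sum.cong[OF refl])
    fix k
    have "coef ((a + b) ^ k) w / fact k = (\<Sum>i\<le>k. real (k choose i) * coef (a ^ i * b ^ (k - i)) w) / fact k"
    proof -
      have "coef ((a + b) ^ k) w = (\<Sum>i\<le>k. coef (of_nat (k choose i) * a ^ i * b ^ (k - i)) w)"
        by (simp add: comm_binom[OF ab] coef_sum)
      also have "\<dots> = (\<Sum>i\<le>k. real (k choose i) * coef (a ^ i * b ^ (k - i)) w)"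
        by (simp add: of_nat_ser mult.assoc)
      finally show ?thesis by simp
    qed
    also have "\<dots> = (\<Sum>i\<le>k. coef (a ^ i * b ^ (k - i)) w / (fact i * fact (k - i)))"
      by (simp add: sum_divide_distrib binomial_fact field_simps)
    finally show "(\<Sum>i\<le>k. coef (a ^ i * b ^ (k - i)) w / (fact i * fact (k - i))) = coef ((a + b) ^ k) w / fact k"
      by simp
  qed
  also have "\<dots> = coef (exps (a + b)) w"
    by (simp add: exps_def coef_evf)
  finally show "coef (exps (a + b)) w = coef (exps a * exps b) w" by simp
qed

lemma plus_list_simp [simp]: "(u::'a list) + v = u @ v" by (simp add: plus_list_def)
lemma zero_list_simp [simp]: "(0::'a list) = []" by (simp add: zero_list_def)
lemma gdeg_list [simp]: "gdeg (w::'a list) = length w" by (simp add: gdeg_list_def)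
lemma gdeg_pair [simp]: "gdeg ((u,v)::('a::gmon \<times> 'b::gmon)) = gdeg u + gdeg v"
  by (simp add: gdeg_prod_def)

definition W :: "nat \<Rightarrow> bool list set" where "W n = {w. length w \<le> n}"

lemma finite_W [simp]: "finite (W n)"
  using finite_lists_length_le[of "UNIV::bool set" n] by (simp add: W_def)

lemma mem_W [simp]: "w \<in> W n \<longleftrightarrow> length w \<le> n" by (simp add: W_def)

lemma W_mono: "n \<le> N \<Longrightarrow> W n \<subseteq> W N" by auto

lemma sum_if_eq1:
  fixes h :: "'b \<Rightarrow> real"
  assumes "finite A" "a \<in> A"
  shows "(\<Sum>x\<in>A. (if x = a then 1 else 0) * h x) = h a"
proof -
  have "(\<Sum>x\<in>A. (if x = a then 1 else 0) * h x) = (\<Sum>x\<in>A. if x = a then h x else 0)"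
    by (rule sum.cong) auto
  then show ?thesis using assms by (simp add: sum.delta)
qed

fun pw :: "(bool \<Rightarrow> 'm::gmon ser) \<Rightarrow> bool list \<Rightarrow> 'm ser" where
  "pw \<phi> [] = 1"
| "pw \<phi> (a # w) = \<phi> a * pw \<phi> w"

lemma pw_append: "pw \<phi> (u @ v) = pw \<phi> u * pw \<phi> v"
  by (induct u) (simp_all add: mult.assoc)

definition phi_ok :: "(bool \<Rightarrow> 'm::gmon ser) \<Rightarrow> bool" where
  "phi_ok \<phi> \<longleftrightarrow> (\<forall>a. ordge (\<phi> a) 1)"

lemma ordge_pw: "phi_ok \<phi> \<Longrightarrow> ordge (pw \<phi> w) (length w)"
proof (induct w)
  case Nil then show ?case by simp
next
  case (Cons a w)
  then show ?case using ordge_mult[of "\<phi> a" 1 "pw \<phi> w" "length w"] by (simp add: phi_ok_def)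
qed

lemma coef_pw_low: "phi_ok \<phi> \<Longrightarrow> gdeg m < length w \<Longrightarrow> coef (pw \<phi> w) m = 0"
  using ordge_pw ordgeD by blast

definition subst :: "(bool \<Rightarrow> 'm::gmon ser) \<Rightarrow> bool list ser \<Rightarrow> 'm ser" where
  "subst \<phi> f = Ser (\<lambda>m. \<Sum>w\<in>W (gdeg m). coef f w * coef (pw \<phi> w) m)"

lemma coef_subst: "coef (subst \<phi> f) m = (\<Sum>w\<in>W (gdeg m). coef f w * coef (pw \<phi> w) m)"
  by (simp add: subst_def)

lemma coef_subst_ext:
  assumes "phi_ok \<phi>" "gdeg m \<le> N"
  shows "coef (subst \<phi> f) m = (\<Sum>w\<in>W N. coef f w * coef (pw \<phi> w) m)"
  unfolding coef_subst
  by (rule sum.mono_neutral_left) (use assms coef_pw_low[OF assms(1)] in auto)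

lemma split_reindex:
  fixes H :: "bool list \<Rightarrow> bool list \<Rightarrow> real"
  shows "(\<Sum>w\<in>W d. \<Sum>p\<in>spl w. H (fst p) (snd p)) =
         (\<Sum>u\<in>W d. \<Sum>v\<in>W d. if length u + length v \<le> d then H u v else 0)"
proof -
  have "(\<Sum>w\<in>W d. \<Sum>p\<in>spl w. H (fst p) (snd p)) = (\<Sum>z\<in>Sigma (W d) spl. H (fst (snd z)) (snd (snd z)))"
    by (subst sum.Sigma) (auto simp: split_beta)
  also have "\<dots> = (\<Sum>q\<in>{q\<in>W d \<times> W d. length (fst q) + length (snd q) \<le> d}. H (fst q) (snd q))"
    by (rule sum.reindex_bij_witness[where i="\<lambda>q. (fst q @ snd q, q)" and j="snd"]) auto
  also have "\<dots> = (\<Sum>q\<in>W d \<times> W d. if length (fst q) + length (snd q) \<le> d then H (fst q) (snd q) else 0)"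
    by (rule sum.inter_filter) simp
  also have "\<dots> = (\<Sum>u\<in>W d. \<Sum>v\<in>W d. if length u + length v \<le> d then H u v else 0)"
    by (simp add: sum.cartesian_product split_beta)
  finally show ?thesis .
qed

lemma subst_mult:
  assumes ok: "phi_ok \<phi>"
  shows "subst \<phi> (f * g) = subst \<phi> f * subst \<phi> g"
proof (rule ser_eqI)
  fix m :: 'a
  let ?d = "gdeg m"
  let ?P = "\<lambda>u. pw \<phi> u"
  have "coef (subst \<phi> f * subst \<phi> g) m =
    (\<Sum>p\<in>spl m. (\<Sum>u\<in>W ?d. coef f u * coef (?P u) (fst p)) * (\<Sum>v\<in>W ?d. coef g v * coef (?P v) (snd p)))"
    unfolding coef_mult
  proof (rule sum.cong[OF refl])
    fix p assume "p \<in> spl m"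
    then have "gdeg (fst p) \<le> ?d" "gdeg (snd p) \<le> ?d" by (auto simp: gdeg_add)
    then show "coef (subst \<phi> f) (fst p) * coef (subst \<phi> g) (snd p) =
      (\<Sum>u\<in>W ?d. coef f u * coef (?P u) (fst p)) * (\<Sum>v\<in>W ?d. coef g v * coef (?P v) (snd p))"
      using coef_subst_ext[OF ok] by simp
  qed
  also have "\<dots> = (\<Sum>p\<in>spl m. \<Sum>u\<in>W ?d. \<Sum>v\<in>W ?d. coef f u * coef (?P u) (fst p) * (coef g v * coef (?P v) (snd p)))"
    by (simp add: sum_product)
  also have "\<dots> = (\<Sum>u\<in>W ?d. \<Sum>v\<in>W ?d. \<Sum>p\<in>spl m. coef f u * coef (?P u) (fst p) * (coef g v * coef (?P v) (snd p)))"
    by (subst sum.swap) (rule sum.cong[OF refl], rule sum.swap)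
  also have "\<dots> = (\<Sum>u\<in>W ?d. \<Sum>v\<in>W ?d. coef f u * coef g v * coef (?P (u @ v)) m)"
    by (simp add: pw_append coef_mult sum_distrib_left algebra_simps)
  also have "\<dots> = (\<Sum>u\<in>W ?d. \<Sum>v\<in>W ?d. if length u + length v \<le> ?d then coef f u * coef g v * coef (?P (u @ v)) m else 0)"
    by (intro sum.cong refl) (auto simp: coef_pw_low[OF ok])
  also have "\<dots> = (\<Sum>w\<in>W ?d. \<Sum>p\<in>spl w. coef f (fst p) * coef g (snd p) * coef (?P (fst p @ snd p)) m)"
    by (rule split_reindex[symmetric])
  also have "\<dots> = (\<Sum>w\<in>W ?d. (\<Sum>p\<in>spl w. coef f (fst p) * coef g (snd p)) * coef (?P w) m)"
    by (intro sum.cong refl) (auto simp: sum_distrib_right)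
  also have "\<dots> = coef (subst \<phi> (f * g)) m"
    by (simp add: coef_subst coef_mult)
  finally show "coef (subst \<phi> (f * g)) m = coef (subst \<phi> f * subst \<phi> g) m" by simp
qed

lemma subst_1: "subst \<phi> 1 = 1"
  by (rule ser_eqI) (simp add: coef_subst sum_if_eq1)

lemma subst_add: "subst \<phi> (f + g) = subst \<phi> f + subst \<phi> g"
  by (rule ser_eqI) (simp add: coef_subst algebra_simps sum.distrib)

lemma subst_diff: "subst \<phi> (f - g) = subst \<phi> f - subst \<phi> g"
  by (rule ser_eqI) (simp add: coef_subst algebra_simps sum_subtractf)

lemma subst_scaleR: "subst \<phi> (c *\<^sub>R f) = c *\<^sub>R subst \<phi> f"
  by (rule ser_eqI) (simp add: coef_subst sum_distrib_left mult.assoc)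

lemma subst_power: "phi_ok \<phi> \<Longrightarrow> subst \<phi> (f ^ k) = subst \<phi> f ^ k"
  by (induct k) (simp_all add: subst_1 subst_mult)

definition letter :: "bool \<Rightarrow> bool list ser" where
  "letter a = Ser (\<lambda>w. if w = [a] then 1 else 0)"

lemma coef_letter: "coef (letter a) w = (if w = [a] then 1 else 0)"
  by (simp add: letter_def)

lemma subst_letter:
  assumes ok: "phi_ok \<phi>" shows "subst \<phi> (letter a) = \<phi> a"
proof (rule ser_eqI)
  fix m :: 'a
  show "coef (subst \<phi> (letter a)) m = coef (\<phi> a) m"
  proof (cases "gdeg m = 0")
    case True
    then have "coef (\<phi> a) m = 0" using ok by (auto simp: phi_ok_def ordge_def)
    moreover have "coef (subst \<phi> (letter a)) m = 0" using True
      by (auto simp: coef_subst coef_letter intro!: sum.neutral)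
    ultimately show ?thesis by simp
  next
    case False
    then show ?thesis by (simp add: coef_subst coef_letter sum_if_eq1)
  qed
qed

lemma ordge_subst: "ordge f 1 \<Longrightarrow> ordge (subst \<phi> f) 1"
  by (auto simp: ordge_def coef_subst gdeg_0)

lemma subst_evf:
  assumes ok: "phi_ok \<phi>" and a: "ordge a 1"
  shows "subst \<phi> (evf a F) = evf (subst \<phi> a) F"
proof (rule ser_eqI)
  fix m :: 'a
  let ?d = "gdeg m"
  have "coef (subst \<phi> (evf a F)) m = (\<Sum>w\<in>W ?d. (\<Sum>k\<le>?d. fps_nth F k * coef (a ^ k) w) * coef (pw \<phi> w) m)"
    unfolding coef_subst by (intro sum.cong refl) (simp add: coef_evf_ext[OF a])
  also have "\<dots> = (\<Sum>k\<le>?d. fps_nth F k * (\<Sum>w\<in>W ?d. coef (a ^ k) w * coef (pw \<phi> w) m))"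
    by (simp add: sum_distrib_left sum_distrib_right mult.assoc sum.swap[of _ "W ?d"])
  also have "\<dots> = (\<Sum>k\<le>?d. fps_nth F k * coef (subst \<phi> a ^ k) m)"
    by (simp add: coef_subst subst_power[OF ok, symmetric])
  also have "\<dots> = coef (evf (subst \<phi> a) F) m"
    by (simp add: coef_evf)
  finally show "coef (subst \<phi> (evf a F)) m = coef (evf (subst \<phi> a) F) m" .
qed

lemma subst_exps: "phi_ok \<phi> \<Longrightarrow> ordge a 1 \<Longrightarrow> subst \<phi> (exps a) = exps (subst \<phi> a)"
  by (simp add: exps_def subst_evf)

lemma subst_lns: "phi_ok \<phi> \<Longrightarrow> ordge a 1 \<Longrightarrow> subst \<phi> (lns a) = lns (subst \<phi> a)"
  by (simp add: lns_def subst_evf)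

type_synonym pw2 = "bool list \<times> bool list"

lemma zero_pair_list [simp]: "(0::'a list \<times> 'b list) = ([], [])"
  by (simp add: zero_prod_def)

definition lx :: "bool \<Rightarrow> pw2 ser" where "lx a = Ser (\<lambda>q. if q = ([a], []) then 1 else 0)"
definition rx :: "bool \<Rightarrow> pw2 ser" where "rx a = Ser (\<lambda>q. if q = ([], [a]) then 1 else 0)"

lemma coef_lx: "coef (lx a) q = (if q = ([a], []) then 1 else 0)" by (simp add: lx_def)
lemma coef_rx: "coef (rx a) q = (if q = ([], [a]) then 1 else 0)" by (simp add: rx_def)

lemma coef_lx_mult:
  "coef (lx a * F) q = (if fst q \<noteq> [] \<and> hd (fst q) = a then coef F (tl (fst q), snd q) else 0)"
proof (cases "fst q \<noteq> [] \<and> hd (fst q) = a")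
  case True
  then obtain u' v where q: "q = (a # u', v)" by (cases q; cases "fst q") auto
  have "coef (lx a * F) q = (\<Sum>p\<in>spl q. (if p = (([a], []), (u', v)) then 1 else 0) * coef F (snd p))"
    unfolding coef_mult
  proof (intro sum.cong refl)
    fix p assume "p \<in> spl q"
    then have "fst p + snd p = (a # u', v)" by (simp add: q)
    then show "coef (lx a) (fst p) * coef F (snd p) = (if p = (([a], []), (u', v)) then 1 else 0) * coef F (snd p)"
      by (cases p) (auto simp: coef_lx)
  qed
  also have "\<dots> = coef F (u', v)"
    using sum_if_eq1[of "spl q" "(([a], []), (u', v))" "\<lambda>p. coef F (snd p)"] by (simp add: q)
  finally show ?thesis by (simp add: q)
next
  case False
  have "coef (lx a) (fst p) * coef F (snd p) = 0" if "p \<in> spl q" for p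
    using that False by (cases p) (auto simp: coef_lx)
  then show ?thesis using False by (auto simp: coef_mult intro!: sum.neutral)
qed

lemma coef_rx_mult:
  "coef (rx a * F) q = (if snd q \<noteq> [] \<and> hd (snd q) = a then coef F (fst q, tl (snd q)) else 0)"
proof (cases "snd q \<noteq> [] \<and> hd (snd q) = a")
  case True
  then obtain u v' where q: "q = (u, a # v')" by (cases q; cases "snd q") auto
  have "coef (rx a * F) q = (\<Sum>p\<in>spl q. (if p = (([], [a]), (u, v')) then 1 else 0) * coef F (snd p))"
    unfolding coef_mult
  proof (intro sum.cong refl)
    fix p assume "p \<in> spl q"
    then have "fst p + snd p = (u, a # v')" by (simp add: q)
    then show "coef (rx a) (fst p) * coef F (snd p) = (if p = (([], [a]), (u, v')) then 1 else 0) * coef F (snd p)"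
      by (cases p) (auto simp: coef_rx)
  qed
  also have "\<dots> = coef F (u, v')"
    using sum_if_eq1[of "spl q" "(([], [a]), (u, v'))" "\<lambda>p. coef F (snd p)"] by (simp add: q)
  finally show ?thesis by (simp add: q)
next
  case False
  have "coef (rx a) (fst p) * coef F (snd p) = 0" if "p \<in> spl q" for p
    using that False by (cases p) (auto simp: coef_rx)
  then show ?thesis using False by (auto simp: coef_mult intro!: sum.neutral)
qed

lemma coef_lx_mult' [simp]:
  "coef (lx a * F) (u, v) = (if u \<noteq> [] \<and> hd u = a then coef F (tl u, v) else 0)"
  using coef_lx_mult[of a F "(u, v)"] by simp

lemma coef_rx_mult' [simp]:
  "coef (rx a * F) (u, v) = (if v \<noteq> [] \<and> hd v = a then coef F (u, tl v) else 0)"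
  using coef_rx_mult[of a F "(u, v)"] by simp

lemma coef_letter_mult:
  "coef (letter a * g) w = (if w \<noteq> [] \<and> hd w = a then coef g (tl w) else 0)"
proof (cases "w \<noteq> [] \<and> hd w = a")
  case True
  then obtain w' where w: "w = a # w'" by (cases w) auto
  have "coef (letter a * g) w = (\<Sum>p\<in>spl w. (if p = ([a], w') then 1 else 0) * coef g (snd p))"
    unfolding coef_mult
  proof (intro sum.cong refl)
    fix p assume "p \<in> spl w"
    then have "fst p @ snd p = a # w'" by (simp add: w)
    then show "coef (letter a) (fst p) * coef g (snd p) = (if p = ([a], w') then 1 else 0) * coef g (snd p)"
      by (cases p) (auto simp: coef_letter Cons_eq_append_conv)
  qed
  also have "\<dots> = coef g w'"
    using sum_if_eq1[of "spl w" "([a], w')" "\<lambda>p. coef g (snd p)"] by (simp add: w)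
  finally show ?thesis by (simp add: w)
next
  case False
  have "coef (letter a) (fst p) * coef g (snd p) = 0" if "p \<in> spl w" for p
    using that False by (cases p) (auto simp: coef_letter)
  then show ?thesis using False by (auto simp: coef_mult intro!: sum.neutral)
qed

lemma coef_mult_letter:
  "coef (g * letter a) w = (if w \<noteq> [] \<and> last w = a then coef g (butlast w) else 0)"
proof (cases "w \<noteq> [] \<and> last w = a")
  case True
  then obtain w' where w: "w = w' @ [a]" by (cases w rule: rev_exhaust) auto
  have "coef (g * letter a) w = (\<Sum>p\<in>spl w. (if p = (w', [a]) then 1 else 0) * coef g (fst p))"
    unfolding coef_mult
  proof (intro sum.cong refl)
    fix p assume "p \<in> spl w"
    then have "fst p @ snd p = w' @ [a]" by (simp add: w)
    then show "coef g (fst p) * coef (letter a) (snd p) = (if p = (w', [a]) then 1 else 0) * coef g (fst p)"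
      by (cases p) (auto simp: coef_letter append_eq_append_conv2 append_eq_Cons_conv)
  qed
  also have "\<dots> = coef g w'"
    using sum_if_eq1[of "spl w" "(w', [a])" "\<lambda>p. coef g (fst p)"] by (simp add: w)
  finally show ?thesis by (simp add: w)
next
  case False
  have "coef g (fst p) * coef (letter a) (snd p) = 0" if "p \<in> spl w" for p
    using that False by (cases p) (auto simp: coef_letter)
  then show ?thesis using False by (auto simp: coef_mult intro!: sum.neutral)
qed

lemma phi_ok_lx: "phi_ok lx" by (simp add: phi_ok_def ordge_def coef_lx gdeg_0)
lemma phi_ok_rx: "phi_ok rx" by (simp add: phi_ok_def ordge_def coef_rx gdeg_0)

definition dl :: "bool \<Rightarrow> pw2 ser" where "dl a = lx a + rx a"
lemma phi_ok_dl: "phi_ok dl"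
  using phi_ok_lx phi_ok_rx by (simp add: phi_ok_def dl_def ordge_add)

lemma pw_lx: "pw lx w = Ser (\<lambda>q. if q = (w, []) then 1 else 0)"
proof (induct w)
  case Nil then show ?case by (rule ser_eqI) auto
next
  case (Cons a w)
  show ?case
  proof (rule ser_eqI)
    fix q :: pw2
    obtain u v where q: "q = (u, v)" by (cases q)
    show "coef (pw lx (a # w)) q = coef (Ser (\<lambda>q. if q = (a # w, []) then 1 else 0)) q"
      by (cases u) (auto simp: coef_lx_mult Cons q)
  qed
qed

lemma pw_rx: "pw rx w = Ser (\<lambda>q. if q = ([], w) then 1 else 0)"
proof (induct w)
  case Nil then show ?case by (rule ser_eqI) auto
next
  case (Cons a w)
  show ?case
  proof (rule ser_eqI)
    fix q :: pw2
    obtain u v where q: "q = (u, v)" by (cases q)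
    show "coef (pw rx (a # w)) q = coef (Ser (\<lambda>q. if q = ([], a # w) then 1 else 0)) q"
      by (cases v) (auto simp: coef_rx_mult Cons q)
  qed
qed

definition Lf :: "bool list ser \<Rightarrow> pw2 ser" where "Lf = subst lx"
definition Rf :: "bool list ser \<Rightarrow> pw2 ser" where "Rf = subst rx"
definition Df :: "bool list ser \<Rightarrow> pw2 ser" where "Df = subst dl"

lemma coef_Lf: "coef (Lf f) q = (if snd q = [] then coef f (fst q) else 0)"
proof -
  have "coef (Lf f) q = (\<Sum>w\<in>W (gdeg q). coef f w * (if q = (w, []) then 1 else 0))"
    by (simp add: Lf_def coef_subst pw_lx)
  also have "\<dots> = (\<Sum>w\<in>W (gdeg q). (if w = fst q \<and> snd q = [] then 1 else 0) * coef f w)"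
    by (intro sum.cong refl) (cases q, auto)
  also have "\<dots> = (if snd q = [] then coef f (fst q) else 0)"
    by (cases q) (auto simp: sum_if_eq1)
  finally show ?thesis .
qed

lemma coef_Rf: "coef (Rf f) q = (if fst q = [] then coef f (snd q) else 0)"
proof -
  have "coef (Rf f) q = (\<Sum>w\<in>W (gdeg q). coef f w * (if q = ([], w) then 1 else 0))"
    by (simp add: Rf_def coef_subst pw_rx)
  also have "\<dots> = (\<Sum>w\<in>W (gdeg q). (if w = snd q \<and> fst q = [] then 1 else 0) * coef f w)"
    by (intro sum.cong refl) (cases q, auto)
  also have "\<dots> = (if fst q = [] then coef f (snd q) else 0)"
    by (cases q) (auto simp: sum_if_eq1)
  finally show ?thesis .
qed

lemma Lf_Rf_commute: "Lf f * Rf g = Rf g * Lf f"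
proof (rule ser_eqI)
  fix q :: pw2
  obtain u v where q: "q = (u, v)" by (cases q)
  have "coef (Lf f * Rf g) q = (\<Sum>p\<in>spl q. (if p = ((u, []), ([], v)) then 1 else 0) * (coef f u * coef g v))"
    unfolding coef_mult
    by (intro sum.cong refl) (auto simp: coef_Lf coef_Rf q)
  also have "\<dots> = coef f u * coef g v" by (rule sum_if_eq1) (auto simp: q)
  finally have 1: "coef (Lf f * Rf g) q = coef f u * coef g v" .
  have "coef (Rf g * Lf f) q = (\<Sum>p\<in>spl q. (if p = (([], v), (u, [])) then 1 else 0) * (coef f u * coef g v))"
    unfolding coef_mult
    by (intro sum.cong refl) (auto simp: coef_Lf coef_Rf q)
  also have "\<dots> = coef f u * coef g v" by (rule sum_if_eq1) (auto simp: q)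
  finally show "coef (Lf f * Rf g) q = coef (Rf g * Lf f) q" using 1 by simp
qed

definition Mop :: "pw2 ser \<Rightarrow> bool list ser" where
  "Mop F = Ser (\<lambda>w. \<Sum>i\<le>length w. real i * (-1) ^ (length w - i) * coef F (take i w, rev (drop i w)))"

definition M0op :: "pw2 ser \<Rightarrow> bool list ser" where
  "M0op F = Ser (\<lambda>w. \<Sum>i\<le>length w. (-1) ^ (length w - i) * coef F (take i w, rev (drop i w)))"

lemma coef_Mop: "coef (Mop F) w = (\<Sum>i\<le>length w. real i * (-1) ^ (length w - i) * coef F (take i w, rev (drop i w)))"
  by (simp add: Mop_def)
lemma coef_M0op: "coef (M0op F) w = (\<Sum>i\<le>length w. (-1) ^ (length w - i) * coef F (take i w, rev (drop i w)))"
  by (simp add: M0op_def)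

lemma Mop_add: "Mop (F + G) = Mop F + Mop G"
  by (rule ser_eqI) (simp add: coef_Mop algebra_simps sum.distrib)
lemma M0op_add: "M0op (F + G) = M0op F + M0op G"
  by (rule ser_eqI) (simp add: coef_M0op algebra_simps sum.distrib)

lemma take_app1: "i \<le> length w' \<Longrightarrow> take i (w' @ [b]) = take i w'" by simp
lemma drop_app1: "i \<le> length w' \<Longrightarrow> drop i (w' @ [b]) = drop i w' @ [b]" by simp

lemma Mop_lx: "Mop (lx a * F) = letter a * (Mop F + M0op F)"
proof (rule ser_eqI)
  fix w :: "bool list"
  show "coef (Mop (lx a * F)) w = coef (letter a * (Mop F + M0op F)) w"
  proof (cases w)
    case Nil then show ?thesis by (simp add: coef_Mop coef_letter_mult)
  next
    case (Cons b w')
    let ?g = "\<lambda>i. real i * (-1) ^ (length w - i) * coef (lx a * F) (take i w, rev (drop i w))"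
    have "coef (Mop (lx a * F)) w = ?g 0 + (\<Sum>j\<le>length w'. ?g (Suc j))"
      unfolding coef_Mop by (simp only: Cons length_Cons sum.atMost_Suc_shift)
    also have "\<dots> = (\<Sum>j\<le>length w'. (real j + 1) * (-1) ^ (length w' - j) *
             (if b = a then coef F (take j w', rev (drop j w')) else 0))"
      by (cases "b = a") (simp_all add: Cons coef_lx_mult algebra_simps)
    also have "\<dots> = coef (letter a * (Mop F + M0op F)) w"
      by (cases "b = a") (simp_all add: Cons coef_letter_mult coef_Mop coef_M0op sum.distrib[symmetric] algebra_simps)
    finally show ?thesis .
  qed
qed

lemma M0op_lx: "M0op (lx a * F) = letter a * M0op F"
proof (rule ser_eqI)
  fix w :: "bool list"
  show "coef (M0op (lx a * F)) w = coef (letter a * M0op F) w"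
  proof (cases w)
    case Nil then show ?thesis by (simp add: coef_M0op coef_letter_mult coef_lx_mult)
  next
    case (Cons b w')
    let ?g = "\<lambda>i. (-1) ^ (length w - i) * coef (lx a * F) (take i w, rev (drop i w))"
    have "coef (M0op (lx a * F)) w = ?g 0 + (\<Sum>j\<le>length w'. ?g (Suc j))"
      unfolding coef_M0op by (simp only: Cons length_Cons sum.atMost_Suc_shift)
    also have "\<dots> = (\<Sum>j\<le>length w'. (-1) ^ (length w' - j) *
             (if b = a then coef F (take j w', rev (drop j w')) else 0))"
      by (cases "b = a") (simp_all add: Cons coef_lx_mult algebra_simps)
    also have "\<dots> = coef (letter a * M0op F) w"
      by (cases "b = a") (simp_all add: Cons coef_letter_mult coef_M0op)
    finally show ?thesis .
  qed
qed

lemma Mop_rx: "Mop (rx a * F) = - (Mop F * letter a)"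
proof (rule ser_eqI)
  fix w :: "bool list"
  show "coef (Mop (rx a * F)) w = coef (- (Mop F * letter a)) w"
  proof (cases w rule: rev_exhaust)
    case Nil then show ?thesis by (simp add: coef_Mop coef_mult_letter)
  next
    case (snoc w' b)
    let ?g = "\<lambda>i. real i * (-1) ^ (length w - i) * coef (rx a * F) (take i w, rev (drop i w))"
    have "coef (Mop (rx a * F)) w = (\<Sum>i\<le>length w'. ?g i) + ?g (Suc (length w'))"
      unfolding coef_Mop by (simp only: snoc length_append_singleton sum.atMost_Suc)
    also have "?g (Suc (length w')) = 0" by (simp add: snoc coef_rx_mult)
    also have "(\<Sum>i\<le>length w'. ?g i) = (\<Sum>i\<le>length w'. - (real i * (-1) ^ (length w' - i) *
             (if b = a then coef F (take i w', rev (drop i w')) else 0)))"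
    proof (intro sum.cong refl)
      fix i assume "i \<in> {..length w'}"
      then have i: "i \<le> length w'" by simp
      then have "(-1::real) ^ (length w - i) = - ((-1) ^ (length w' - i))"
        by (simp add: snoc Suc_diff_le)
      then show "?g i = - (real i * (-1) ^ (length w' - i) *
             (if b = a then coef F (take i w', rev (drop i w')) else 0))"
        by (simp only: snoc take_app1[OF i] drop_app1[OF i]) (simp add: coef_rx_mult)
    qed
    also have "\<dots> + 0 = coef (- (Mop F * letter a)) w"
      by (cases "b = a") (simp_all add: snoc coef_mult_letter coef_Mop sum_negf)
    finally show ?thesis .
  qed
qed

lemma M0op_rx: "M0op (rx a * F) = - (M0op F * letter a)"
proof (rule ser_eqI)
  fix w :: "bool list"
  show "coef (M0op (rx a * F)) w = coef (- (M0op F * letter a)) w"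
  proof (cases w rule: rev_exhaust)
    case Nil then show ?thesis by (simp add: coef_M0op coef_mult_letter coef_rx_mult)
  next
    case (snoc w' b)
    let ?g = "\<lambda>i. (-1) ^ (length w - i) * coef (rx a * F) (take i w, rev (drop i w))"
    have "coef (M0op (rx a * F)) w = (\<Sum>i\<le>length w'. ?g i) + ?g (Suc (length w'))"
      unfolding coef_M0op by (simp only: snoc length_append_singleton sum.atMost_Suc)
    also have "?g (Suc (length w')) = 0" by (simp add: snoc coef_rx_mult)
    also have "(\<Sum>i\<le>length w'. ?g i) = (\<Sum>i\<le>length w'. - ((-1) ^ (length w' - i) *
             (if b = a then coef F (take i w', rev (drop i w')) else 0)))"
    proof (intro sum.cong refl)
      fix i assume "i \<in> {..length w'}"
      then have i: "i \<le> length w'" by simp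
      then have "(-1::real) ^ (length w - i) = - ((-1) ^ (length w' - i))"
        by (simp add: snoc Suc_diff_le)
      then show "?g i = - ((-1) ^ (length w' - i) *
             (if b = a then coef F (take i w', rev (drop i w')) else 0))"
        by (simp only: snoc take_app1[OF i] drop_app1[OF i]) (simp add: coef_rx_mult)
    qed
    also have "\<dots> + 0 = coef (- (M0op F * letter a)) w"
      by (cases "b = a") (simp_all add: snoc coef_mult_letter coef_M0op sum_negf)
    finally show ?thesis .
  qed
qed

fun thetaS :: "bool list \<Rightarrow> bool list ser" where
  "thetaS [] = 0"
| "thetaS [a] = letter a"
| "thetaS (a # b # w) = letter a * thetaS (b # w) - thetaS (b # w) * letter a"

lemma Mop_1: "Mop 1 = 0"
  by (rule ser_eqI) (auto simp: coef_Mop zero_prod_def intro!: sum.neutral)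

lemma M0op_1: "M0op 1 = 1"
proof (rule ser_eqI)
  fix w :: "bool list"
  show "coef (M0op 1) w = coef 1 w"
  proof (cases w)
    case Nil then show ?thesis by (simp add: coef_M0op zero_prod_def)
  next
    case (Cons b w')
    then show ?thesis by (auto simp: coef_M0op zero_prod_def intro!: sum.neutral)
  qed
qed

lemma MD_pw:
  "Mop (pw dl w) = thetaS w \<and> M0op (pw dl w) = (if w = [] then 1 else 0)"
proof (induct w)
  case Nil then show ?case by (simp add: Mop_1 M0op_1)
next
  case (Cons a w)
  have e: "pw dl (a # w) = lx a * pw dl w + rx a * pw dl w" by (simp add: dl_def distrib_right)
  have m: "Mop (pw dl (a # w)) = letter a * (Mop (pw dl w) + M0op (pw dl w)) - Mop (pw dl w) * letter a"
    by (simp only: e Mop_add Mop_lx Mop_rx) simp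
  have m0: "M0op (pw dl (a # w)) = letter a * M0op (pw dl w) - M0op (pw dl w) * letter a"
    by (simp only: e M0op_add M0op_lx M0op_rx) simp
  show ?case
    unfolding m m0 using Cons.hyps by (cases w) auto
qed

lemma subst_pw_letter: "phi_ok \<phi> \<Longrightarrow> subst \<phi> (pw letter w) = pw \<phi> w"
  by (induct w) (simp_all add: subst_1 subst_mult subst_letter)

lemma gdeg_take_drop: "i \<le> length v \<Longrightarrow> gdeg (take i v, rev (drop i v)) = length v"
  by simp

lemma Mop_Df_repr:
  "coef (Mop (Df Z)) v = (\<Sum>w\<in>W (length v). coef Z w * coef (thetaS w) v)"
proof -
  have "coef (Mop (Df Z)) v = (\<Sum>i\<le>length v. real i * (-1) ^ (length v - i) *
          (\<Sum>w\<in>W (length v). coef Z w * coef (pw dl w) (take i v, rev (drop i v))))"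
    unfolding coef_Mop Df_def
    by (intro sum.cong refl) (simp add: coef_subst)
  also have "\<dots> = (\<Sum>w\<in>W (length v). coef Z w * (\<Sum>i\<le>length v. real i * (-1) ^ (length v - i) *
          coef (pw dl w) (take i v, rev (drop i v))))"
    by (simp add: sum_distrib_left sum_distrib_right algebra_simps sum.swap[of _ "W (length v)"])
  also have "\<dots> = (\<Sum>w\<in>W (length v). coef Z w * coef (thetaS w) v)"
    by (intro sum.cong refl) (simp add: MD_pw[THEN conjunct1, symmetric] coef_Mop)
  finally show ?thesis .
qed

lemma Mop_Lf: "coef (Mop (Lf Z)) v = real (length v) * coef Z v"
proof -
  have "coef (Mop (Lf Z)) v = (\<Sum>i\<le>length v. if i = length v then real (length v) * coef Z v else 0)"
    unfolding coef_Mop by (intro sum.cong refl) (auto simp: coef_Lf)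
  then show ?thesis by simp
qed

lemma Mop_Rf: "coef (Mop (Rf Z)) v = 0"
  unfolding coef_Mop by (auto simp: coef_Rf intro!: sum.neutral)

theorem DSW:
  assumes "Df Z = Lf Z + Rf Z"
  shows "real (length v) * coef Z v = (\<Sum>w\<in>W (length v). coef Z w * coef (thetaS w) v)"
proof -
  have "coef (Mop (Df Z)) v = real (length v) * coef Z v"
    using assms by (simp add: Mop_add Mop_Lf Mop_Rf)
  then show ?thesis by (simp add: Mop_Df_repr)
qed

lemma spl_0_aux:
  assumes "fst p + snd p = (0::'a::gmon)" shows "p = (0, 0)"
proof -
  have "gdeg (fst p) + gdeg (snd p) = 0" by (metis assms gdeg_add gdeg_zero)
  then have "gdeg (fst p) = 0" "gdeg (snd p) = 0" by simp_all
  then have "fst p = 0" "snd p = 0" by (simp_all only: gdeg_0)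
  then show ?thesis by (cases p) simp
qed

lemma spl_0: "spl (0::'a::gmon) = {(0, 0)}"
proof (rule set_eqI)
  fix p :: "'a \<times> 'a"
  show "p \<in> spl 0 \<longleftrightarrow> p \<in> {(0, 0)}"
    using spl_0_aux[of p] by auto
qed

lemma coef_mult_0: "coef (f * g) (0::'a::gmon) = coef f 0 * coef g 0"
  by (simp add: coef_mult spl_0)

lemma coef_exps_0: "coef (exps a) (0::'a::gmon) = 1"
  by (simp add: exps_def coef_evf)

lemma ordge_letter: "ordge (letter a) 1"
  by (simp add: ordge_def coef_letter)

lemma Lf_letter: "Lf (letter a) = lx a" by (simp add: Lf_def subst_letter phi_ok_lx)
lemma Rf_letter: "Rf (letter a) = rx a" by (simp add: Rf_def subst_letter phi_ok_rx)
lemma Df_letter: "Df (letter a) = lx a + rx a" by (simp add: Df_def subst_letter phi_ok_dl dl_def)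

definition EE :: "bool list ser" where "EE = exps (letter True) * exps (letter False)"
definition ZZ :: "bool list ser" where "ZZ = lns (EE - 1)"

lemma ordge_EE1: "ordge (EE - 1) 1"
  unfolding ordge_1
  using coef_mult_0[of "exps (letter True)" "exps (letter False)", simplified]
    coef_exps_0[of "letter True", simplified] coef_exps_0[of "letter False", simplified]
  by (simp add: EE_def)

lemma exps_ZZ: "exps ZZ = EE"
  unfolding ZZ_def using exps_lns[OF ordge_EE1] by simp

lemma ordge_ZZ: "ordge ZZ 1" unfolding ZZ_def by (rule ordge_lns)

lemma Lf_exps: "ordge a 1 \<Longrightarrow> Lf (exps a) = exps (Lf a)"
  by (simp add: Lf_def subst_exps phi_ok_lx)
lemma Rf_exps: "ordge a 1 \<Longrightarrow> Rf (exps a) = exps (Rf a)"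
  by (simp add: Rf_def subst_exps phi_ok_rx)
lemma Df_exps: "ordge a 1 \<Longrightarrow> Df (exps a) = exps (Df a)"
  by (simp add: Df_def subst_exps phi_ok_dl)

lemma ordge_Lf: "ordge a 1 \<Longrightarrow> ordge (Lf a) 1" unfolding Lf_def by (rule ordge_subst)
lemma ordge_Rf: "ordge a 1 \<Longrightarrow> ordge (Rf a) 1" unfolding Rf_def by (rule ordge_subst)

lemma Df_EE: "Df EE = Lf EE * Rf EE"
proof -
  have ex: "exps (lx a + rx a) = Lf (exps (letter a)) * Rf (exps (letter a))" for a
  proof -
    have "exps (lx a + rx a) = exps (lx a) * exps (rx a)"
      by (rule exps_add) (use ordge_Lf[OF ordge_letter] ordge_Rf[OF ordge_letter] Lf_Rf_commute
            in \<open>simp_all add: Lf_letter[symmetric] Rf_letter[symmetric]\<close>)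
    then show ?thesis by (simp add: Lf_exps[OF ordge_letter] Rf_exps[OF ordge_letter] Lf_letter Rf_letter)
  qed
  have "Df EE = Df (exps (letter True)) * Df (exps (letter False))"
    by (simp add: EE_def Df_def subst_mult phi_ok_dl)
  also have "\<dots> = Lf (exps (letter True)) * Rf (exps (letter True)) * (Lf (exps (letter False)) * Rf (exps (letter False)))"
    by (simp add: Df_exps[OF ordge_letter] Df_letter ex)
  also have "\<dots> = Lf (exps (letter True)) * (Rf (exps (letter True)) * Lf (exps (letter False))) * Rf (exps (letter False))"
    by (simp add: mult.assoc)
  also have "\<dots> = Lf (exps (letter True)) * (Lf (exps (letter False)) * Rf (exps (letter True))) * Rf (exps (letter False))"
    by (simp add: Lf_Rf_commute)
  also have "\<dots> = Lf EE * Rf EE"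
    by (simp add: EE_def Lf_def Rf_def subst_mult phi_ok_lx phi_ok_rx mult.assoc)
  finally show ?thesis .
qed

lemma ZZ_primitive: "Df ZZ = Lf ZZ + Rf ZZ"
proof -
  have o1: "ordge (Lf ZZ) 1" "ordge (Rf ZZ) 1" using ordge_Lf[OF ordge_ZZ] ordge_Rf[OF ordge_ZZ] by simp_all
  have "Lf EE = exps (Lf ZZ)" by (simp add: exps_ZZ[symmetric] Lf_exps[OF ordge_ZZ])
  moreover have "Rf EE = exps (Rf ZZ)" by (simp add: exps_ZZ[symmetric] Rf_exps[OF ordge_ZZ])
  ultimately have "Df EE = exps (Lf ZZ) * exps (Rf ZZ)"
    by (simp add: Df_EE)
  also have "\<dots> = exps (Lf ZZ + Rf ZZ)"
    by (rule exps_add[symmetric]) (use o1 Lf_Rf_commute in auto)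
  finally have e: "Df EE = exps (Lf ZZ + Rf ZZ)" .
  have "Df ZZ = lns (Df (EE - 1))"
    by (simp add: ZZ_def Df_def subst_lns[OF phi_ok_dl ordge_EE1])
  also have "\<dots> = lns (exps (Lf ZZ + Rf ZZ) - 1)"
    by (simp add: Df_def subst_diff subst_1 e[unfolded Df_def])
  also have "\<dots> = Lf ZZ + Rf ZZ"
    by (rule lns_exps) (use o1 in \<open>simp add: ordge_add\<close>)
  finally show ?thesis .
qed

definition homog :: "bool list ser \<Rightarrow> nat \<Rightarrow> bool" where
  "homog f n \<longleftrightarrow> (\<forall>v. coef f v \<noteq> 0 \<longrightarrow> length v = n)"

lemma homog_mult: "homog f n \<Longrightarrow> homog g m \<Longrightarrow> homog (f * g) (n + m)"
  unfolding homog_def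
proof (intro allI impI)
  fix v assume hf: "\<forall>v. coef f v \<noteq> 0 \<longrightarrow> length v = n" and hg: "\<forall>v. coef g v \<noteq> 0 \<longrightarrow> length v = m"
    and "coef (f * g) v \<noteq> 0"
  then obtain p where p: "p \<in> spl v" "coef f (fst p) * coef g (snd p) \<noteq> 0"
    by (auto simp: coef_mult elim: sum.not_neutral_contains_not_neutral)
  then show "length v = n + m" using hf hg by (cases p) auto
qed

lemma homog_diff: "homog f n \<Longrightarrow> homog g n \<Longrightarrow> homog (f - g) n"
  unfolding homog_def
proof (intro allI impI)
  fix v assume "\<forall>v. coef f v \<noteq> 0 \<longrightarrow> length v = n" "\<forall>v. coef g v \<noteq> 0 \<longrightarrow> length v = n"
    "coef (f - g) v \<noteq> 0"
  moreover then have "coef f v \<noteq> 0 \<or> coef g v \<noteq> 0" by auto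
  ultimately show "length v = n" by blast
qed

lemma homog_letter: "homog (letter a) 1" unfolding homog_def by (simp add: coef_letter)

lemma homog_thetaS: "w \<noteq> [] \<Longrightarrow> homog (thetaS w) (length w)"
proof (induct w rule: thetaS.induct)
  case 1 then show ?case by simp
next
  case (2 a) then show ?case using homog_letter by simp
next
  case (3 a b w)
  then have h: "homog (thetaS (b # w)) (length (b # w))" by simp
  show ?case using homog_mult[OF homog_letter h] homog_mult[OF h homog_letter]
    by (simp add: homog_diff add.commute)
qed

lemma coef_thetaS_len: "coef (thetaS w) v \<noteq> 0 \<Longrightarrow> length v = length w"
  by (cases "w = []") (use homog_thetaS in \<open>auto simp: homog_def\<close>)

lemma ZZ_repr:
  assumes "length v \<le> N"
  shows "coef ZZ v = (\<Sum>w\<in>W N. (coef ZZ w / real (length w)) * coef (thetaS w) v)"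
proof (cases "v = []")
  case True
  have "coef ZZ v = 0" using ordgeD[OF ordge_ZZ, of "[]"] True by simp
  moreover have "(coef ZZ w / real (length w)) * coef (thetaS w) v = 0" for w
    using coef_thetaS_len[of w v] True by (cases w) auto
  then have "(\<Sum>w\<in>W N. (coef ZZ w / real (length w)) * coef (thetaS w) v) = 0"
    by (intro sum.neutral) auto
  ultimately show ?thesis by simp
next
  case False
  have "(\<Sum>w\<in>W N. (coef ZZ w / real (length w)) * coef (thetaS w) v) =
        (\<Sum>w\<in>W N. (coef ZZ w * coef (thetaS w) v) / real (length v))"
  proof (intro sum.cong refl)
    fix w
    show "(coef ZZ w / real (length w)) * coef (thetaS w) v = (coef ZZ w * coef (thetaS w) v) / real (length v)"
    proof (cases "coef (thetaS w) v = 0")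
      case True then show ?thesis by simp
    next
      case False then have "length v = length w" by (rule coef_thetaS_len)
      then show ?thesis by simp
    qed
  qed
  also have "\<dots> = (\<Sum>w\<in>W (length v). coef ZZ w * coef (thetaS w) v) / real (length v)"
    unfolding sum_divide_distrib[symmetric]
    by (rule arg_cong[where f="\<lambda>x. x / _"], rule sum.mono_neutral_right)
       (use assms coef_thetaS_len in auto)
  also have "\<dots> = coef ZZ v"
  proof -
    have "real (length v) \<noteq> 0" using False by simp
    then show ?thesis using DSW[OF ZZ_primitive, of v] by (simp add: field_simps)
  qed
  finally show ?thesis by simp
qed

lemma letter_power: "letter a ^ k = Ser (\<lambda>w. if w = replicate k a then 1 else 0)"
proof (induct k)
  case 0 then show ?case by (rule ser_eqI) auto
next
  case (Suc k)
  show ?case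
  proof (rule ser_eqI)
    fix w :: "bool list"
    show "coef (letter a ^ Suc k) w = coef (Ser (\<lambda>w. if w = replicate (Suc k) a then 1 else 0)) w"
      by (cases w) (auto simp: coef_letter_mult Suc)
  qed
qed

lemma coef_exps_letter:
  "coef (exps (letter a)) w = (if w = replicate (length w) a then 1 / fact (length w) else 0)"
proof -
  have "coef (exps (letter a)) w = (\<Sum>k\<le>length w. (if k = length w then (if w = replicate (length w) a then 1 / fact (length w) else 0) else 0))"
    unfolding exps_def coef_evf letter_power
    by (intro sum.cong refl) (auto simp: divide_simps)
  then show ?thesis by simp
qed

definition blk :: "nat \<Rightarrow> nat \<Rightarrow> bool list" where
  "blk r s = replicate r True @ replicate s False"

lemma length_blk [simp]: "length (blk r s) = r + s" by (simp add: blk_def)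

lemma blk_inj: "blk i j = blk r s \<Longrightarrow> i = r \<and> j = s"
proof -
  assume h: "blk i j = blk r s"
  have "length (filter (\<lambda>x. x) (blk i j)) = i" "length (filter Not (blk i j)) = j"
    by (simp_all add: blk_def filter_replicate)
  moreover have "length (filter (\<lambda>x. x) (blk r s)) = r" "length (filter Not (blk r s)) = s"
    by (simp_all add: blk_def filter_replicate)
  ultimately show ?thesis using h by metis
qed

lemma blk_nil: "blk r s = [] \<longleftrightarrow> r = 0 \<and> s = 0" by (simp add: blk_def)

lemma sum_single:
  assumes "finite A" "a \<in> A" "\<And>x. x \<in> A \<Longrightarrow> x \<noteq> a \<Longrightarrow> f x = 0"
  shows "sum f A = f a"
proof -
  have "sum f A = sum f {a}"
    by (rule sum.mono_neutral_right) (use assms in auto)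
  then show ?thesis by simp
qed

lemma coef_EE_blk: "coef EE (blk r s) = 1 / (fact r * fact s)"
proof -
  have "coef EE (blk r s) = (\<Sum>p\<in>spl (blk r s). coef (exps (letter True)) (fst p) * coef (exps (letter False)) (snd p))"
    by (simp add: EE_def coef_mult)
  also have "\<dots> = (\<lambda>p. coef (exps (letter True)) (fst p) * coef (exps (letter False)) (snd p)) (replicate r True, replicate s False)"
  proof (rule sum_single)
    show "(replicate r True, replicate s False) \<in> spl (blk r s)" by (simp add: blk_def)
  next
    fix p assume p: "p \<in> spl (blk r s)" "p \<noteq> (replicate r True, replicate s False)"
    show "coef (exps (letter True)) (fst p) * coef (exps (letter False)) (snd p) = 0"
    proof (rule ccontr)
      assume "coef (exps (letter True)) (fst p) * coef (exps (letter False)) (snd p) \<noteq> 0"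
      then have 1: "fst p = replicate (length (fst p)) True" and 2: "snd p = replicate (length (snd p)) False"
        by (auto simp: coef_exps_letter split: if_splits)
      then have "blk (length (fst p)) (length (snd p)) = blk r s" using p(1) by (simp add: blk_def)
      then have "length (fst p) = r" "length (snd p) = s" using blk_inj by blast+
      then show False using p(2) 1 2 by (cases p) auto
    qed
  qed simp
  also have "\<dots> = 1 / (fact r * fact s)" by (simp add: coef_exps_letter)
  finally show ?thesis .
qed

lemma coef_EE_nblk: "(\<And>r s. u \<noteq> blk r s) \<Longrightarrow> coef EE u = 0"
proof -
  assume nb: "\<And>r s. u \<noteq> blk r s"
  have "coef (exps (letter True)) (fst p) * coef (exps (letter False)) (snd p) = 0" if "p \<in> spl u" for p
  proof (rule ccontr)
    assume "coef (exps (letter True)) (fst p) * coef (exps (letter False)) (snd p) \<noteq> 0"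
    then have "fst p = replicate (length (fst p)) True" "snd p = replicate (length (snd p)) False"
      by (auto simp: coef_exps_letter split: if_splits)
    then have "u = blk (length (fst p)) (length (snd p))" using that by (simp add: blk_def)
    then show False using nb by blast
  qed
  then show ?thesis by (auto simp: EE_def coef_mult intro!: sum.neutral)
qed

definition PP :: "nat \<Rightarrow> (nat \<times> nat) set" where "PP m = ({0..m} \<times> {0..m}) - {(0, 0)}"

lemma finite_PP [simp]: "finite (PP m)" by (simp add: PP_def)

lemma sum_G_step:
  fixes h :: "bool list \<Rightarrow> 'v::real_vector"
  assumes h: "\<And>u. length u > m \<Longrightarrow> h u = 0"
  shows "(\<Sum>u\<in>W m. coef (EE - 1) u *\<^sub>R h u) = (\<Sum>q\<in>PP m. (1 / (fact (fst q) * fact (snd q))) *\<^sub>R h (blk (fst q) (snd q)))"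
proof -
  let ?B = "(\<lambda>q. blk (fst q) (snd q)) ` PP m"
  have inj: "inj_on (\<lambda>q. blk (fst q) (snd q)) (PP m)"
    by (rule inj_onI) (metis blk_inj prod.collapse)
  have "(\<Sum>u\<in>W m. coef (EE - 1) u *\<^sub>R h u) = (\<Sum>u\<in>W m \<union> ?B. coef (EE - 1) u *\<^sub>R h u)"
  proof (rule sum.mono_neutral_left)
    show "\<forall>i\<in>W m \<union> ?B - W m. coef (EE - 1) i *\<^sub>R h i = 0" using h by auto
  qed auto
  also have "\<dots> = (\<Sum>u\<in>?B. coef (EE - 1) u *\<^sub>R h u)"
  proof (rule sum.mono_neutral_right)
    show "\<forall>i\<in>W m \<union> ?B - ?B. coef (EE - 1) i *\<^sub>R h i = 0"
    proof
      fix u assume u: "u \<in> W m \<union> ?B - ?B"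
      show "coef (EE - 1) u *\<^sub>R h u = 0"
      proof (cases "u = []")
        case True then show ?thesis using ordgeD[OF ordge_EE1, of "[]"] by simp
      next
        case False
        have "u \<noteq> blk r s" for r s
        proof
          assume ub: "u = blk r s"
          then have "r \<le> m" "s \<le> m" "(r, s) \<noteq> (0, 0)" using u False by (auto simp: blk_nil)
          then have "(r, s) \<in> PP m" by (simp add: PP_def)
          then show False using u ub by force
        qed
        then show ?thesis using False by (simp add: coef_EE_nblk)
      qed
    qed
  qed auto
  also have "\<dots> = (\<Sum>q\<in>PP m. coef (EE - 1) (blk (fst q) (snd q)) *\<^sub>R h (blk (fst q) (snd q)))"
    by (rule sum.reindex[OF inj, unfolded comp_def])
  also have "\<dots> = (\<Sum>q\<in>PP m. (1 / (fact (fst q) * fact (snd q))) *\<^sub>R h (blk (fst q) (snd q)))"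
  proof (intro sum.cong refl)
    fix q assume "q \<in> PP m"
    then have "blk (fst q) (snd q) \<noteq> []" by (cases q) (auto simp: PP_def blk_nil)
    then show "coef (EE - 1) (blk (fst q) (snd q)) *\<^sub>R h (blk (fst q) (snd q)) =
       (1 / (fact (fst q) * fact (snd q))) *\<^sub>R h (blk (fst q) (snd q))"
      by (simp add: coef_EE_blk)
  qed
  finally show ?thesis .
qed

lemma split_reindex_gen:
  fixes H :: "bool list \<Rightarrow> bool list \<Rightarrow> 'v::comm_monoid_add"
  shows "(\<Sum>w\<in>W d. \<Sum>p\<in>spl w. H (fst p) (snd p)) =
         (\<Sum>u\<in>W d. \<Sum>v\<in>W d. if length u + length v \<le> d then H u v else 0)"
proof -
  have "(\<Sum>w\<in>W d. \<Sum>p\<in>spl w. H (fst p) (snd p)) = (\<Sum>z\<in>Sigma (W d) spl. H (fst (snd z)) (snd (snd z)))"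
    by (subst sum.Sigma) (auto simp: split_beta)
  also have "\<dots> = (\<Sum>q\<in>{q\<in>W d \<times> W d. length (fst q) + length (snd q) \<le> d}. H (fst q) (snd q))"
    by (rule sum.reindex_bij_witness[where i="\<lambda>q. (fst q @ snd q, q)" and j="snd"]) auto
  also have "\<dots> = (\<Sum>q\<in>W d \<times> W d. if length (fst q) + length (snd q) \<le> d then H (fst q) (snd q) else 0)"
    by (rule sum.inter_filter) simp
  also have "\<dots> = (\<Sum>u\<in>W d. \<Sum>v\<in>W d. if length u + length v \<le> d then H u v else 0)"
    by (simp add: sum.cartesian_product split_beta)
  finally show ?thesis .
qed

definition SS :: "nat \<Rightarrow> nat \<Rightarrow> (nat \<times> nat) list set" where
  "SS m n = {rs. length rs = n \<and> set rs \<subseteq> PP m}"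

lemma finite_SS [simp]: "finite (SS m n)"
proof -
  have "SS m n \<subseteq> {rs. set rs \<subseteq> PP m \<and> length rs \<le> n}" by (auto simp: SS_def)
  then show ?thesis by (rule finite_subset) (simp add: finite_lists_length_le)
qed

definition prodc :: "(nat \<times> nat) list \<Rightarrow> real" where
  "prodc rs = prod_list (map (\<lambda>q. 1 / (fact (fst q) * fact (snd q))) rs)"

lemma dynkin_word_Cons: "dynkin_word (q # rs) = blk (fst q) (snd q) @ dynkin_word rs"
  by (cases q) (simp add: dynkin_word_def blk_def)

lemma dynkin_word_Nil: "dynkin_word [] = []" by (simp add: dynkin_word_def)

lemma SS_Suc: "SS m (Suc k) = (\<lambda>(q, rs). q # rs) ` (PP m \<times> SS m k)"
proof (rule set_eqI)
  fix rs
  show "rs \<in> SS m (Suc k) \<longleftrightarrow> rs \<in> (\<lambda>(q, rs). q # rs) ` (PP m \<times> SS m k)"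
    by (cases rs) (auto simp: SS_def image_iff)
qed

lemma SS_0: "SS m 0 = {[]}" by (auto simp: SS_def)

lemma power_G_sum:
  fixes \<Psi> :: "bool list \<Rightarrow> 'v::real_vector"
  assumes "\<And>u. length u > m \<Longrightarrow> \<Psi> u = 0"
  shows "(\<Sum>w\<in>W m. coef ((EE - 1) ^ k) w *\<^sub>R \<Psi> w) = (\<Sum>rs\<in>SS m k. prodc rs *\<^sub>R \<Psi> (dynkin_word rs))"
  using assms
proof (induct k arbitrary: \<Psi>)
  case 0
  have "(\<Sum>w\<in>W m. coef ((EE - 1) ^ 0) w *\<^sub>R \<Psi> w) = (\<Sum>w\<in>W m. (if w = [] then 1 else 0) *\<^sub>R \<Psi> w)"
    by simp
  also have "\<dots> = \<Psi> []" by (subst sum_single[where a="[]"]) auto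
  finally show ?case by (simp add: SS_0 prodc_def dynkin_word_Nil)
next
  case (Suc k)
  let ?G = "EE - 1"
  have "(\<Sum>w\<in>W m. coef (?G ^ Suc k) w *\<^sub>R \<Psi> w) =
        (\<Sum>w\<in>W m. \<Sum>p\<in>spl w. (coef ?G (fst p) * coef (?G ^ k) (snd p)) *\<^sub>R \<Psi> (fst p @ snd p))"
    by (intro sum.cong refl) (simp add: coef_mult scaleR_sum_left)
  also have "\<dots> = (\<Sum>u\<in>W m. \<Sum>v\<in>W m. if length u + length v \<le> m then (coef ?G u * coef (?G ^ k) v) *\<^sub>R \<Psi> (u @ v) else 0)"
    by (rule split_reindex_gen)
  also have "\<dots> = (\<Sum>u\<in>W m. coef ?G u *\<^sub>R (\<Sum>v\<in>W m. coef (?G ^ k) v *\<^sub>R \<Psi> (u @ v)))"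
    unfolding scaleR_sum_right by (intro sum.cong refl) (auto simp: Suc.prems)
  also have "\<dots> = (\<Sum>u\<in>W m. coef ?G u *\<^sub>R (\<Sum>rs\<in>SS m k. prodc rs *\<^sub>R \<Psi> (u @ dynkin_word rs)))"
    by (intro sum.cong refl arg_cong[where f="\<lambda>x. _ *\<^sub>R x"] Suc.hyps) (simp add: Suc.prems)
  also have "\<dots> = (\<Sum>rs\<in>SS m k. prodc rs *\<^sub>R (\<Sum>u\<in>W m. coef ?G u *\<^sub>R \<Psi> (u @ dynkin_word rs)))"
    by (simp add: scaleR_sum_right sum.swap[of _ "W m"] scaleR_scaleR mult.commute)
  also have "\<dots> = (\<Sum>rs\<in>SS m k. prodc rs *\<^sub>R (\<Sum>q\<in>PP m. (1 / (fact (fst q) * fact (snd q))) *\<^sub>R \<Psi> (blk (fst q) (snd q) @ dynkin_word rs)))"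
    by (intro sum.cong refl arg_cong[where f="\<lambda>x. _ *\<^sub>R x"] sum_G_step) (simp add: Suc.prems)
  also have "\<dots> = (\<Sum>z\<in>PP m \<times> SS m k. prodc (fst z # snd z) *\<^sub>R \<Psi> (dynkin_word (fst z # snd z)))"
    apply (simp add: scaleR_sum_right prodc_def dynkin_word_Cons scaleR_scaleR mult.commute)
    apply (subst sum.swap)
    apply (simp add: sum.cartesian_product split_beta)
    done
  also have "\<dots> = (\<Sum>rs\<in>SS m (Suc k). prodc rs *\<^sub>R \<Psi> (dynkin_word rs))"
    unfolding SS_Suc
    by (subst sum.reindex) (auto simp: inj_on_def split_beta)
  finally show ?case .
qed

lemma length_dynkin_word: "length (dynkin_word rs) = sum_list (map (\<lambda>(r, s). r + s) rs)"
  by (induct rs) (auto simp: dynkin_word_Nil dynkin_word_Cons split: prod.splits)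

lemma prodc_eq: "prodc rs = 1 / prod_list (map (\<lambda>(r, s). fact r * fact s) rs)"
  by (induct rs) (auto simp: prodc_def split: prod.splits)

lemma bch_sum_identity:
  fixes \<Phi> :: "bool list \<Rightarrow> 'v::real_vector"
  assumes \<Phi>: "\<And>u. length u > m \<Longrightarrow> \<Phi> u = 0"
  shows "(\<Sum>n\<in>{1..m}. ((-1) ^ (n - 1) / real n) *\<^sub>R
        (\<Sum>rs\<in>{rs. length rs = n \<and> set rs \<subseteq> ({0..m} \<times> {0..m}) - {(0, 0)}}.
           (1 / (real (sum_list (map (\<lambda>(r, s). r + s) rs)) *
                 prod_list (map (\<lambda>(r, s). fact r * fact s) rs))) *\<^sub>R
           \<Phi> (dynkin_word rs)))
   = (\<Sum>w\<in>W m. (coef ZZ w / real (length w)) *\<^sub>R \<Phi> w)"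
proof -
  let ?G = "EE - 1"
  define \<Psi> where "\<Psi> = (\<lambda>w. (1 / real (length w)) *\<^sub>R \<Phi> w)"
  have inner: "(\<Sum>rs\<in>{rs. length rs = n \<and> set rs \<subseteq> ({0..m} \<times> {0..m}) - {(0, 0)}}.
           (1 / (real (sum_list (map (\<lambda>(r, s). r + s) rs)) *
                 prod_list (map (\<lambda>(r, s). fact r * fact s) rs))) *\<^sub>R
           \<Phi> (dynkin_word rs)) = (\<Sum>w\<in>W m. coef (?G ^ n) w *\<^sub>R \<Psi> w)" for n
  proof -
    have "(\<Sum>rs\<in>{rs. length rs = n \<and> set rs \<subseteq> ({0..m} \<times> {0..m}) - {(0, 0)}}.
           (1 / (real (sum_list (map (\<lambda>(r, s). r + s) rs)) *
                 prod_list (map (\<lambda>(r, s). fact r * fact s) rs))) *\<^sub>R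
           \<Phi> (dynkin_word rs)) = (\<Sum>rs\<in>SS m n. prodc rs *\<^sub>R \<Psi> (dynkin_word rs))"
      unfolding SS_def PP_def
      by (intro sum.cong refl) (simp add: prodc_eq length_dynkin_word \<Psi>_def)
    also have "\<dots> = (\<Sum>w\<in>W m. coef (?G ^ n) w *\<^sub>R \<Psi> w)"
      by (rule power_G_sum[symmetric]) (simp add: \<Phi> \<Psi>_def)
    finally show ?thesis .
  qed
  have cz: "(\<Sum>n\<in>{1..m}. ((-1) ^ (n - 1) / real n) * coef (?G ^ n) w) = coef ZZ w" if "w \<in> W m" for w
  proof -
    have "coef ZZ w = (\<Sum>k\<le>m. fps_nth (fps_ln 1) k * coef (?G ^ k) w)"
      unfolding ZZ_def lns_def by (rule coef_evf_ext[OF ordge_EE1]) (use that in simp)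
    also have "\<dots> = (\<Sum>k\<in>insert 0 {1..m}. fps_nth (fps_ln 1) k * coef (?G ^ k) w)"
      by (rule sum.cong) auto
    also have "\<dots> = (\<Sum>n\<in>{1..m}. ((-1) ^ (n - 1) / real n) * coef (?G ^ n) w)"
      by (simp add: fps_ln_nth)
    finally show ?thesis by simp
  qed
  have "(\<Sum>n\<in>{1..m}. ((-1) ^ (n - 1) / real n) *\<^sub>R (\<Sum>w\<in>W m. coef (?G ^ n) w *\<^sub>R \<Psi> w)) =
        (\<Sum>w\<in>W m. (\<Sum>n\<in>{1..m}. ((-1) ^ (n - 1) / real n) * coef (?G ^ n) w) *\<^sub>R \<Psi> w)"
    by (simp only: scaleR_sum_right scaleR_scaleR scaleR_sum_left) (rule sum.swap)
  also have "\<dots> = (\<Sum>w\<in>W m. (coef ZZ w / real (length w)) *\<^sub>R \<Phi> w)"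
    by (intro sum.cong refl) (simp only: cz \<Psi>_def scaleR_scaleR, simp)
  finally show ?thesis by (simp add: inner)
qed

fun pwe :: "(bool \<Rightarrow> 'A::real_algebra_1) \<Rightarrow> bool list \<Rightarrow> 'A" where
  "pwe \<beta> [] = 1"
| "pwe \<beta> (a # w) = \<beta> a * pwe \<beta> w"

lemma pwe_append: "pwe \<beta> (u @ v) = pwe \<beta> u * pwe \<beta> v"
  by (induct u) (simp_all add: mult.assoc)

definition nilp :: "(bool \<Rightarrow> 'A::real_algebra_1) \<Rightarrow> nat \<Rightarrow> bool" where
  "nilp \<beta> m \<longleftrightarrow> (\<forall>w. length w > m \<longrightarrow> pwe \<beta> w = 0)"

definition ev :: "(bool \<Rightarrow> 'A::real_algebra_1) \<Rightarrow> nat \<Rightarrow> bool list ser \<Rightarrow> 'A" where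
  "ev \<beta> m f = (\<Sum>w\<in>W m. coef f w *\<^sub>R pwe \<beta> w)"

lemma ev_add: "ev \<beta> m (f + g) = ev \<beta> m f + ev \<beta> m g"
  by (simp add: ev_def scaleR_add_left sum.distrib)

lemma ev_diff: "ev \<beta> m (f - g) = ev \<beta> m f - ev \<beta> m g"
  by (simp add: ev_def scaleR_diff_left sum_subtractf)

lemma ev_scaleR: "ev \<beta> m (c *\<^sub>R f) = c *\<^sub>R ev \<beta> m f"
  by (simp add: ev_def scaleR_sum_right)

lemma ev_1: "ev \<beta> m 1 = 1"
proof -
  have "ev \<beta> m 1 = (\<Sum>w\<in>W m. (if w = [] then 1 else 0) *\<^sub>R pwe \<beta> w)" by (simp add: ev_def)
  also have "\<dots> = (if [] = ([]::bool list) then 1 else 0) *\<^sub>R pwe \<beta> []"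
    by (rule sum_single) auto
  finally show ?thesis by simp
qed

lemma ev_0: "ev \<beta> m 0 = 0" by (simp add: ev_def)

lemma ev_letter: "m \<ge> 1 \<Longrightarrow> ev \<beta> m (letter a) = \<beta> a"
proof -
  assume m: "m \<ge> 1"
  have "ev \<beta> m (letter a) = (\<Sum>w\<in>W m. (if w = [a] then 1 else 0) *\<^sub>R pwe \<beta> w)" by (simp add: ev_def coef_letter)
  also have "\<dots> = (if [a] = [a] then 1 else 0) *\<^sub>R pwe \<beta> [a]"
    by (rule sum_single) (use m in auto)
  finally show ?thesis by simp
qed

lemma ev_mult:
  assumes nil: "nilp \<beta> m"
  shows "ev \<beta> m (f * g) = ev \<beta> m f * ev \<beta> m g"
proof -
  have "ev \<beta> m f * ev \<beta> m g = (\<Sum>u\<in>W m. \<Sum>v\<in>W m. (coef f u * coef g v) *\<^sub>R pwe \<beta> (u @ v))"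
    by (simp add: ev_def sum_product pwe_append mult.commute)
  also have "\<dots> = (\<Sum>u\<in>W m. \<Sum>v\<in>W m. if length u + length v \<le> m then (coef f u * coef g v) *\<^sub>R pwe \<beta> (u @ v) else 0)"
    by (intro sum.cong refl) (use nil in \<open>auto simp: nilp_def\<close>)
  also have "\<dots> = (\<Sum>w\<in>W m. \<Sum>p\<in>spl w. (coef f (fst p) * coef g (snd p)) *\<^sub>R pwe \<beta> (fst p @ snd p))"
    by (rule split_reindex_gen[symmetric])
  also have "\<dots> = ev \<beta> m (f * g)"
    by (simp add: ev_def coef_mult scaleR_sum_left)
  finally show ?thesis by simp
qed

lemma ev_power: "nilp \<beta> m \<Longrightarrow> ev \<beta> m (f ^ k) = ev \<beta> m f ^ k"
  by (induct k) (simp_all add: ev_1 ev_mult)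

definition evm :: "nat \<Rightarrow> 'A::real_algebra_1 \<Rightarrow> real fps \<Rightarrow> 'A" where
  "evm m A F = (\<Sum>k\<le>m. fps_nth F k *\<^sub>R A ^ k)"

lemma ev_evf:
  assumes nil: "nilp \<beta> m" and a: "ordge a 1"
  shows "ev \<beta> m (evf a F) = evm m (ev \<beta> m a) F"
proof -
  have "ev \<beta> m (evf a F) = (\<Sum>w\<in>W m. (\<Sum>k\<le>m. fps_nth F k * coef (a ^ k) w) *\<^sub>R pwe \<beta> w)"
    unfolding ev_def by (intro sum.cong refl) (simp add: coef_evf_ext[OF a])
  also have "\<dots> = (\<Sum>k\<le>m. fps_nth F k *\<^sub>R (\<Sum>w\<in>W m. coef (a ^ k) w *\<^sub>R pwe \<beta> w))"
    by (simp add: scaleR_sum_left scaleR_sum_right sum.swap[of _ "W m"])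
  also have "\<dots> = (\<Sum>k\<le>m. fps_nth F k *\<^sub>R ev \<beta> m (a ^ k))"
    by (simp add: ev_def)
  also have "\<dots> = evm m (ev \<beta> m a) F"
    by (simp add: evm_def ev_power[OF nil])
  finally show ?thesis .
qed

lemma ev_cong: "(\<And>v. length v \<le> m \<Longrightarrow> coef f v = coef g v) \<Longrightarrow> ev \<beta> m f = ev \<beta> m g"
  by (simp add: ev_def)

fun nestc :: "(bool \<Rightarrow> 'A::real_algebra_1) \<Rightarrow> bool list \<Rightarrow> 'A" where
  "nestc \<beta> [] = 0"
| "nestc \<beta> [a] = \<beta> a"
| "nestc \<beta> (a # b # w) = \<beta> a * nestc \<beta> (b # w) - nestc \<beta> (b # w) * \<beta> a"

lemma ev_thetaS: "nilp \<beta> m \<Longrightarrow> m \<ge> 1 \<Longrightarrow> ev \<beta> m (thetaS w) = nestc \<beta> w"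
  by (induct w rule: thetaS.induct) (simp_all add: ev_0 ev_letter ev_diff ev_mult)

lemma ev_sum: "finite A \<Longrightarrow> ev \<beta> m (sum f A) = (\<Sum>x\<in>A. ev \<beta> m (f x))"
  by (induct A rule: finite_induct) (simp_all add: ev_0 ev_add)

lemma ev_ZZ:
  assumes nil: "nilp \<beta> m" and m: "m \<ge> 1"
  shows "ev \<beta> m ZZ = (\<Sum>w\<in>W m. (coef ZZ w / real (length w)) *\<^sub>R nestc \<beta> w)"
proof -
  have "ev \<beta> m ZZ = ev \<beta> m (\<Sum>w\<in>W m. (coef ZZ w / real (length w)) *\<^sub>R thetaS w)"
    by (rule ev_cong) (simp add: coef_sum ZZ_repr)
  also have "\<dots> = (\<Sum>w\<in>W m. (coef ZZ w / real (length w)) *\<^sub>R ev \<beta> m (thetaS w))"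
    by (simp add: ev_sum ev_scaleR)
  also have "\<dots> = (\<Sum>w\<in>W m. (coef ZZ w / real (length w)) *\<^sub>R nestc \<beta> w)"
    by (simp add: ev_thetaS[OF nil m])
  finally show ?thesis .
qed

definition expm :: "nat \<Rightarrow> 'A::real_algebra_1 \<Rightarrow> 'A" where "expm m A = evm m A (fps_exp 1)"

lemma ev_exps: "nilp \<beta> m \<Longrightarrow> ordge a 1 \<Longrightarrow> ev \<beta> m (exps a) = expm m (ev \<beta> m a)"
  by (simp add: exps_def expm_def ev_evf)

lemma expm_ev_ZZ:
  assumes nil: "nilp \<beta> m" and m: "m \<ge> 1"
  shows "expm m (ev \<beta> m ZZ) = expm m (\<beta> True) * expm m (\<beta> False)"
proof -
  have "expm m (ev \<beta> m ZZ) = ev \<beta> m (exps ZZ)" by (simp add: ev_exps[OF nil ordge_ZZ])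
  also have "\<dots> = ev \<beta> m EE" by (simp add: exps_ZZ)
  also have "\<dots> = expm m (\<beta> True) * expm m (\<beta> False)"
    by (simp add: EE_def ev_mult[OF nil] ev_exps[OF nil ordge_letter] ev_letter[OF m])
  finally show ?thesis .
qed

lemma expm_inj_aux:
  assumes nil: "nilp \<beta> m" and m: "m \<ge> 1"
  shows "\<beta> True = evm m (expm m (\<beta> True) - 1) (fps_ln 1)"
proof -
  have "\<beta> True = ev \<beta> m (lns (exps (letter True) - 1))"
    by (simp add: lns_exps[OF ordge_letter] ev_letter[OF m])
  also have "\<dots> = evm m (ev \<beta> m (exps (letter True) - 1)) (fps_ln 1)"
    by (simp add: lns_def ev_evf[OF nil ordge_exps_minus_1])
  also have "\<dots> = evm m (expm m (\<beta> True) - 1) (fps_ln 1)"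
    by (simp add: ev_diff ev_1 ev_exps[OF nil ordge_letter] ev_letter[OF m])
  finally show ?thesis .
qed

lemma expm_add_scaled:
  assumes nil: "nilp \<beta> m" and m: "m \<ge> 1"
  shows "expm m (c *\<^sub>R \<beta> True) * expm m (d *\<^sub>R \<beta> True) = expm m ((c + d) *\<^sub>R \<beta> True)"
proof -
  have o: "ordge (c *\<^sub>R letter True) 1" for c using ordge_scaleR[OF ordge_letter] by blast
  have comm: "(c *\<^sub>R letter True) * (d *\<^sub>R letter True) = (d *\<^sub>R letter True) * (c *\<^sub>R letter True)"
    by (simp add: mult.commute)
  have "exps (c *\<^sub>R letter True) * exps (d *\<^sub>R letter True) = exps ((c + d) *\<^sub>R letter True)"
    using exps_add[OF o o comm] by (simp add: scaleR_add_left)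
  then have "ev \<beta> m (exps (c *\<^sub>R letter True) * exps (d *\<^sub>R letter True)) = ev \<beta> m (exps ((c + d) *\<^sub>R letter True))"
    by simp
  then show ?thesis
    by (simp add: ev_mult[OF nil] ev_exps[OF nil o] ev_scaleR ev_letter[OF m])
qed

lemma evm_0: "evm m (0::'A::real_algebra_1) F = fps_nth F 0 *\<^sub>R 1"
proof -
  have "evm m (0::'A) F = (\<Sum>k\<le>m. if k = 0 then fps_nth F 0 *\<^sub>R 1 else 0)"
    unfolding evm_def by (intro sum.cong refl) (auto simp: power_0_left)
  then show ?thesis by simp
qed

lemma expm_0: "expm m (0::'A::real_algebra_1) = 1"
  by (simp add: expm_def evm_0)

definition Vs :: "('n::finite \<Rightarrow> nat) \<Rightarrow> nat \<Rightarrow> (real^'n) set" where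
  "Vs \<sigma> k = {x. \<forall>i. \<sigma> i \<noteq> k \<longrightarrow> x $ i = 0}"

definition Vge :: "('n::finite \<Rightarrow> nat) \<Rightarrow> nat \<Rightarrow> (real^'n) set" where
  "Vge \<sigma> l = {x. \<forall>i. \<sigma> i < l \<longrightarrow> x $ i = 0}"

lemma subspace_Vs: "subspace (Vs \<sigma> k)"
  by (rule real_vector.subspaceI) (auto simp: Vs_def)

lemma subspace_Vge: "subspace (Vge \<sigma> k)"
  by (rule real_vector.subspaceI) (auto simp: Vge_def)

lemma basis_exp: "x = (\<Sum>i\<in>UNIV. x $ i *\<^sub>R axis i (1::real))"
  using basis_expansion[of x] by (simp add: scalar_mult_eq_scaleR)

lemma stratum_eq: "stratum \<sigma> k = Vs \<sigma> k"
proof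
  show "stratum \<sigma> k \<subseteq> Vs \<sigma> k"
    unfolding stratum_def
  proof (rule span_minimal)
    show "{axis i 1 |i. \<sigma> i = k} \<subseteq> Vs \<sigma> k" by (auto simp: Vs_def axis_def)
    show "subspace (Vs \<sigma> k)" by (rule subspace_Vs)
  qed
next
  show "Vs \<sigma> k \<subseteq> stratum \<sigma> k"
  proof
    fix x assume x: "x \<in> Vs \<sigma> k"
    have "x = (\<Sum>i\<in>UNIV. x $ i *\<^sub>R axis i (1::real))" by (rule basis_exp)
    also have "\<dots> = (\<Sum>i\<in>{i. \<sigma> i = k}. x $ i *\<^sub>R axis i (1::real))"
      by (rule sum.mono_neutral_right) (use x in \<open>auto simp: Vs_def\<close>)
    also have "\<dots> \<in> stratum \<sigma> k"
      unfolding stratum_def by (intro span_sum span_scale span_base) auto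
    finally show "x \<in> stratum \<sigma> k" .
  qed
qed

locale carnot =
  fixes br :: "real^'n::finite \<Rightarrow> real^'n \<Rightarrow> real^'n" and \<sigma> :: "'n \<Rightarrow> nat"
  assumes SL: "stratified_lie_algebra br \<sigma>"
begin

lemma bil: "bilinear br" using SL by (simp add: stratified_lie_algebra_def)
lemma br_alt: "br x x = 0" using SL by (simp add: stratified_lie_algebra_def)
lemma jacobi: "br x (br y z) + br y (br z x) + br z (br x y) = 0"
  using SL by (simp add: stratified_lie_algebra_def)
lemma sig1: "1 \<le> \<sigma> i" using SL by (simp add: stratified_lie_algebra_def)
lemma strat: "k \<ge> 1 \<Longrightarrow> span {br u v | u v. u \<in> stratum \<sigma> 1 \<and> v \<in> stratum \<sigma> k} = stratum \<sigma> (k + 1)"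
  using SL by (simp add: stratified_lie_algebra_def)

lemma ladd: "br (x + y) z = br x z + br y z" by (rule bilinear_ladd[OF bil])
lemma radd: "br x (y + z) = br x y + br x z" by (rule bilinear_radd[OF bil])
lemma lmul: "br (c *\<^sub>R x) y = c *\<^sub>R br x y" by (rule bilinear_lmul[OF bil])
lemma rmul: "br x (c *\<^sub>R y) = c *\<^sub>R br x y" by (rule bilinear_rmul[OF bil])
lemma lzero: "br 0 y = 0" by (rule bilinear_lzero[OF bil])
lemma rzero: "br x 0 = 0" by (rule bilinear_rzero[OF bil])
lemma lsub: "br (x - y) z = br x z - br y z" by (rule bilinear_lsub[OF bil])
lemma rsub: "br x (y - z) = br x y - br x z" by (rule bilinear_rsub[OF bil])
lemma lneg: "br (- x) y = - br x y" by (rule bilinear_lneg[OF bil])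
lemma rneg: "br x (- y) = - br x y" by (rule bilinear_rneg[OF bil])

lemma antisym: "br x y = - br y x"
proof -
  have h: "br (x + y) (x + y) = br x x + br x y + br y x + br y y" by (simp add: ladd radd algebra_simps)
  have "br x y + br y x = br (x + y) (x + y) - br x x - br y y" using h by (simp add: algebra_simps)
  then have "br x y + br y x = 0" by (simp add: br_alt)
  then show ?thesis by (simp add: eq_neg_iff_add_eq_0)
qed

lemma grade1: "k \<ge> 1 \<Longrightarrow> u \<in> Vs \<sigma> 1 \<Longrightarrow> v \<in> Vs \<sigma> k \<Longrightarrow> br u v \<in> Vs \<sigma> (k + 1)"
proof -
  assume k: "k \<ge> 1" and u: "u \<in> Vs \<sigma> 1" and v: "v \<in> Vs \<sigma> k"
  have "br u v \<in> span {br u v | u v. u \<in> stratum \<sigma> 1 \<and> v \<in> stratum \<sigma> k}"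
    by (rule span_base) (use u v in \<open>auto simp: stratum_eq\<close>)
  then show ?thesis using strat[OF k] by (simp add: stratum_eq)
qed

lemma grade: "a \<ge> 1 \<Longrightarrow> b \<ge> 1 \<Longrightarrow> u \<in> Vs \<sigma> a \<Longrightarrow> v \<in> Vs \<sigma> b \<Longrightarrow> br u v \<in> Vs \<sigma> (a + b)"
proof (induct a arbitrary: b u v rule: nat_induct_at_least)
  case base
  then show ?case using grade1[of b u v] by (simp add: add.commute)
next
  case (Suc a)
  have A: "u \<in> span {br u v | u v. u \<in> stratum \<sigma> 1 \<and> v \<in> stratum \<sigma> a}"
    using Suc.prems(2) strat[OF Suc.hyps(1)] by (simp add: stratum_eq)
  have B: "span {br u v | u v. u \<in> stratum \<sigma> 1 \<and> v \<in> stratum \<sigma> a} \<subseteq> {u. \<forall>v\<in>Vs \<sigma> b. br u v \<in> Vs \<sigma> (Suc a + b)}"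
  proof (rule span_minimal)
    show "subspace {u. \<forall>v\<in>Vs \<sigma> b. br u v \<in> Vs \<sigma> (Suc a + b)}"
    proof (rule real_vector.subspaceI)
      show "0 \<in> {u. \<forall>v\<in>Vs \<sigma> b. br u v \<in> Vs \<sigma> (Suc a + b)}"
        by (simp add: lzero Vs_def)
    next
      fix x y assume "x \<in> {u. \<forall>v\<in>Vs \<sigma> b. br u v \<in> Vs \<sigma> (Suc a + b)}" "y \<in> {u. \<forall>v\<in>Vs \<sigma> b. br u v \<in> Vs \<sigma> (Suc a + b)}"
      then show "x + y \<in> {u. \<forall>v\<in>Vs \<sigma> b. br u v \<in> Vs \<sigma> (Suc a + b)}"
        by (auto simp: ladd Vs_def)
    next
      fix c x assume "x \<in> {u. \<forall>v\<in>Vs \<sigma> b. br u v \<in> Vs \<sigma> (Suc a + b)}"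
      then show "c *\<^sub>R x \<in> {u. \<forall>v\<in>Vs \<sigma> b. br u v \<in> Vs \<sigma> (Suc a + b)}"
        by (auto simp: lmul Vs_def)
    qed
  next
    show "{br u v | u v. u \<in> stratum \<sigma> 1 \<and> v \<in> stratum \<sigma> a} \<subseteq> {u. \<forall>v\<in>Vs \<sigma> b. br u v \<in> Vs \<sigma> (Suc a + b)}"
    proof
      fix x assume "x \<in> {br u v | u v. u \<in> stratum \<sigma> 1 \<and> v \<in> stratum \<sigma> a}"
      then obtain u1 ua where x: "x = br u1 ua" and u1: "u1 \<in> stratum \<sigma> 1" and ua: "ua \<in> stratum \<sigma> a"
        by blast
      have "br x v \<in> Vs \<sigma> (Suc a + b)" if v: "v \<in> Vs \<sigma> b" for v
      proof -
        have u1': "u1 \<in> Vs \<sigma> 1" and ua': "ua \<in> Vs \<sigma> a" using u1 ua by (simp_all add: stratum_eq)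
        have e: "br (br u1 ua) v = br u1 (br ua v) + br ua (- br u1 v)"
        proof -
          have "br v (br u1 ua) + br u1 (br ua v) + br ua (br v u1) = 0" by (rule jacobi)
          then show ?thesis by (simp add: antisym[of "br u1 ua" v] antisym[of v u1] rneg algebra_simps)
        qed
        have 1: "br ua v \<in> Vs \<sigma> (a + b)" using Suc.hyps(2)[OF Suc.prems(1) ua' v] .
        have 2: "br u1 (br ua v) \<in> Vs \<sigma> (a + b + 1)" using grade1[OF _ u1' 1] Suc.hyps(1) by simp
        have 3: "- br u1 v \<in> Vs \<sigma> (b + 1)"
          using grade1[OF Suc.prems(1) u1' v] subspace_neg[OF subspace_Vs] by blast
        have 4: "br ua (- br u1 v) \<in> Vs \<sigma> (a + (b + 1))" using Suc.hyps(2)[OF _ ua' 3] by simp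
        have f4b: "br ua (- br u1 v) \<in> Vs \<sigma> (a + b + 1)" using 4 by (simp add: add.assoc)
        have "br x v \<in> Vs \<sigma> (a + b + 1)"
          unfolding x e by (rule subspace_add[OF subspace_Vs 2 f4b])
        then show ?thesis by simp
      qed
      then show "x \<in> {u. \<forall>v\<in>Vs \<sigma> b. br u v \<in> Vs \<sigma> (Suc a + b)}" by blast
    qed
  qed
  show ?case using A B Suc.prems(3) by blast
qed

lemma axis_Vs: "axis i (1::real) \<in> Vs \<sigma> (\<sigma> i)" by (auto simp: Vs_def axis_def)

lemma br_axis: "br (axis i 1) (axis j 1) \<in> Vs \<sigma> (\<sigma> i + \<sigma> j)"
  by (rule grade[OF sig1 sig1 axis_Vs axis_Vs])

lemma br_axis_comp: "(br (axis i 1) (axis j 1)) $ k \<noteq> 0 \<Longrightarrow> \<sigma> k = \<sigma> i + \<sigma> j"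
  using br_axis[of i j] by (auto simp: Vs_def)

lemma lsum: "finite A \<Longrightarrow> br (sum f A) y = (\<Sum>i\<in>A. br (f i) y)"
  by (induct A rule: finite_induct) (simp_all add: lzero ladd)
lemma rsum: "finite A \<Longrightarrow> br x (sum f A) = (\<Sum>i\<in>A. br x (f i))"
  by (induct A rule: finite_induct) (simp_all add: rzero radd)

lemma br_expand: "br u v = (\<Sum>i\<in>UNIV. \<Sum>j\<in>UNIV. (u $ i * v $ j) *\<^sub>R br (axis i 1) (axis j 1))"
proof -
  have "br u v = br (\<Sum>i\<in>UNIV. u $ i *\<^sub>R axis i (1::real)) (\<Sum>j\<in>UNIV. v $ j *\<^sub>R axis j (1::real))"
    using basis_exp[of u] basis_exp[of v] by simp
  also have "\<dots> = (\<Sum>i\<in>UNIV. \<Sum>j\<in>UNIV. (u $ i * v $ j) *\<^sub>R br (axis i 1) (axis j 1))"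
    apply (simp add: lsum rsum lmul rmul scaleR_sum_right)
    apply (subst sum.swap)
    apply (simp add: mult.commute)
    done
  finally show ?thesis .
qed

lemma br_comp: "(br u v) $ k = (\<Sum>i\<in>UNIV. \<Sum>j\<in>UNIV. u $ i * v $ j * (br (axis i 1) (axis j 1)) $ k)"
  by (subst br_expand) (simp add: sum_component)

lemma br_Vge: "v \<in> Vge \<sigma> l \<Longrightarrow> br u v \<in> Vge \<sigma> (l + 1)"
proof -
  assume v: "v \<in> Vge \<sigma> l"
  have "(br u v) $ k = 0" if k: "\<sigma> k < l + 1" for k
  proof -
    have "u $ i * v $ j * (br (axis i 1) (axis j 1)) $ k = 0" for i j
    proof (cases "(br (axis i 1) (axis j 1)) $ k = 0")
      case False
      then have "\<sigma> k = \<sigma> i + \<sigma> j" by (rule br_axis_comp)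
      then have "\<sigma> j < l" using k sig1[of i] by simp
      then have "v $ j = 0" using v by (simp add: Vge_def)
      then show ?thesis by simp
    qed simp
    then show ?thesis by (subst br_comp) (simp add: sum.neutral)
  qed
  then show ?thesis by (simp add: Vge_def)
qed

definition mstep :: nat where "mstep = carnot_step \<sigma>"

lemma sig_le: "\<sigma> i \<le> mstep"
  unfolding mstep_def carnot_step_def by (rule Max_ge) auto

lemma mstep_ge1: "mstep \<ge> 1" using sig_le[of undefined] sig1[of undefined] by simp

lemma Vge_big: "l > mstep \<Longrightarrow> x \<in> Vge \<sigma> l \<Longrightarrow> x = 0"
  using sig_le by (auto simp: Vge_def vec_eq_iff intro: le_less_trans)

lemma Vge_1: "x \<in> Vge \<sigma> 1" using sig1 by (auto simp: Vge_def not_less_eq_eq dest: leD)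

lemma nb_Vge: "w \<noteq> [] \<Longrightarrow> nested_bracket br X Y w \<in> Vge \<sigma> (length w)"
proof (induct w rule: induct_list012)
  case (2 a) then show ?case using Vge_1[of X] Vge_1[of Y] by simp
next
  case (3 a b w)
  then show ?case using br_Vge[of "nested_bracket br X Y (b # w)" "length (b # w)"] by simp
qed simp

end

typedef (overloaded) ('n::finite) endo = "{f :: (real^'n) \<times> real \<Rightarrow> (real^'n) \<times> real. linear f}"
  morphisms app Abs_endo
  by (rule exI[of _ "\<lambda>x. x"]) (simp add: linear_iff)

setup_lifting type_definition_endo

instantiation endo :: (finite) real_algebra_1
begin
lift_definition zero_endo :: "'a::finite endo" is "\<lambda>_. 0" by (simp add: linear_iff)
lift_definition one_endo :: "'a::finite endo" is "\<lambda>x. x" by (simp add: linear_iff)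
lift_definition plus_endo :: "'a::finite endo \<Rightarrow> 'a endo \<Rightarrow> 'a endo" is "\<lambda>f g x. f x + g x"
  by (simp add: linear_iff algebra_simps scaleR_add_right)
lift_definition minus_endo :: "'a::finite endo \<Rightarrow> 'a endo \<Rightarrow> 'a endo" is "\<lambda>f g x. f x - g x"
  by (simp add: linear_iff algebra_simps scaleR_diff_right)
lift_definition uminus_endo :: "'a::finite endo \<Rightarrow> 'a endo" is "\<lambda>f x. - f x"
  by (simp add: linear_iff algebra_simps)
lift_definition scaleR_endo :: "real \<Rightarrow> 'a::finite endo \<Rightarrow> 'a endo" is "\<lambda>c f x. c *\<^sub>R f x"
  by (simp add: linear_iff algebra_simps scaleR_add_right)
lift_definition times_endo :: "'a::finite endo \<Rightarrow> 'a endo \<Rightarrow> 'a endo" is "\<lambda>f g x. f (g x)"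
  using linear_compose[unfolded o_def] by blast
instance
proof
  fix a b c :: "'a endo" and r s :: real
  show "a * b * c = a * (b * c)" by transfer simp
  show "1 * a = a" by transfer simp
  show "a * 1 = a" by transfer simp
  show "(a + b) * c = a * c + b * c" by transfer simp
  show "a * (b + c) = a * b + a * c" by transfer (simp add: real_vector.linear_add)
  show "(0::'a::finite endo) \<noteq> 1"
  proof transfer
    show "(\<lambda>_. 0::(real^'a) \<times> real) \<noteq> (\<lambda>x. x)"
    proof
      assume "(\<lambda>_. 0::(real^'a) \<times> real) = (\<lambda>x. x)"
      then have "(0::(real^'a) \<times> real) = (0, 1)" by metis
      then show False by (simp add: zero_prod_def)
    qed
  qed
  show "a + b + c = a + (b + c)" by transfer (simp add: add.assoc)
  show "a + b = b + a" by transfer (simp add: add.commute)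
  show "0 + a = a" by transfer simp
  show "- a + a = 0" by transfer simp
  show "a - b = a + - b" by transfer simp
  show "r *\<^sub>R (a + b) = r *\<^sub>R a + r *\<^sub>R b" by transfer (simp add: scaleR_add_right)
  show "(r + s) *\<^sub>R a = r *\<^sub>R a + s *\<^sub>R a" by transfer (simp add: scaleR_add_left)
  show "r *\<^sub>R s *\<^sub>R a = (r * s) *\<^sub>R a" by transfer simp
  show "1 *\<^sub>R a = a" by transfer simp
  show "r *\<^sub>R a * b = r *\<^sub>R (a * b)" by transfer simp
  show "a * r *\<^sub>R b = r *\<^sub>R (a * b)" by transfer (simp add: real_vector.linear_scale)
qed
end

lemma endo_eqI: "(\<And>x. app A x = app B x) \<Longrightarrow> A = B"
  by (metis app_inject ext)

lemma app_simps [simp]: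
  "app 0 x = 0" "app 1 x = x" "app (A + B) x = app A x + app B x" "app (A - B) x = app A x - app B x"
  "app (- A) x = - app A x" "app (c *\<^sub>R A) x = c *\<^sub>R app A x" "app (A * B) x = app A (app B x)"
  by (transfer, simp)+

definition Dv :: "('n::finite \<Rightarrow> nat) \<Rightarrow> real^'n \<Rightarrow> real^'n" where
  "Dv \<sigma> x = (\<chi> i. real (\<sigma> i) * x $ i)"

context carnot
begin

lemma Dv_br: "Dv \<sigma> (br u v) = br (Dv \<sigma> u) v + br u (Dv \<sigma> v)"
unfolding vec_eq_iff proof (intro allI)
  fix k
  have t: "real (\<sigma> k) * (u $ i * v $ j * (br (axis i 1) (axis j 1)) $ k) =
        real (\<sigma> i) * u $ i * v $ j * (br (axis i 1) (axis j 1)) $ k +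
        u $ i * (real (\<sigma> j) * v $ j) * (br (axis i 1) (axis j 1)) $ k" for i j
  proof (cases "(br (axis i 1) (axis j 1)) $ k = 0")
    case False
    then have "\<sigma> k = \<sigma> i + \<sigma> j" by (rule br_axis_comp)
    then show ?thesis by (simp add: algebra_simps)
  qed simp
  have "(Dv \<sigma> (br u v)) $ k = (\<Sum>i\<in>UNIV. \<Sum>j\<in>UNIV. real (\<sigma> k) * (u $ i * v $ j * (br (axis i 1) (axis j 1)) $ k))"
    by (simp add: Dv_def br_comp[of u v k] sum_distrib_left)
  also have "\<dots> = (\<Sum>i\<in>UNIV. \<Sum>j\<in>UNIV. real (\<sigma> i) * u $ i * v $ j * (br (axis i 1) (axis j 1)) $ k) +
       (\<Sum>i\<in>UNIV. \<Sum>j\<in>UNIV. u $ i * (real (\<sigma> j) * v $ j) * (br (axis i 1) (axis j 1)) $ k)"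
    by (simp only: t sum.distrib)
  also have "\<dots> = (br (Dv \<sigma> u) v + br u (Dv \<sigma> v)) $ k"
    by (simp only: vector_add_component br_comp[of "Dv \<sigma> u" v k] br_comp[of u "Dv \<sigma> v" k])
       (simp add: Dv_def)
  finally show "(Dv \<sigma> (br u v)) $ k = (br (Dv \<sigma> u) v + br u (Dv \<sigma> v)) $ k" .
qed

lemma dil_br: "dil \<sigma> r (br u v) = br (dil \<sigma> r u) (dil \<sigma> r v)"
unfolding vec_eq_iff proof (intro allI)
  fix k
  have t: "r ^ \<sigma> k * (u $ i * v $ j * (br (axis i 1) (axis j 1)) $ k) =
        (r ^ \<sigma> i * u $ i) * (r ^ \<sigma> j * v $ j) * (br (axis i 1) (axis j 1)) $ k" for i j
  proof (cases "(br (axis i 1) (axis j 1)) $ k = 0")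
    case False
    then have "\<sigma> k = \<sigma> i + \<sigma> j" by (rule br_axis_comp)
    then show ?thesis by (simp add: algebra_simps power_add)
  qed simp
  have "(dil \<sigma> r (br u v)) $ k = (\<Sum>i\<in>UNIV. \<Sum>j\<in>UNIV. r ^ \<sigma> k * (u $ i * v $ j * (br (axis i 1) (axis j 1)) $ k))"
    by (simp add: dil_def br_comp[of u v k] sum_distrib_left)
  also have "\<dots> = (\<Sum>i\<in>UNIV. \<Sum>j\<in>UNIV. (r ^ \<sigma> i * u $ i) * (r ^ \<sigma> j * v $ j) * (br (axis i 1) (axis j 1)) $ k)"
    by (simp only: t)
  also have "\<dots> = (br (dil \<sigma> r u) (dil \<sigma> r v)) $ k"
    by (simp only: br_comp[of "dil \<sigma> r u" "dil \<sigma> r v" k]) (simp add: dil_def)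
  finally show "(dil \<sigma> r (br u v)) $ k = (br (dil \<sigma> r u) (dil \<sigma> r v)) $ k" .
qed

lemma dil_add: "dil \<sigma> r (x + y) = dil \<sigma> r x + dil \<sigma> r y"
  by (simp add: dil_def vec_eq_iff algebra_simps)
lemma dil_scaleR: "dil \<sigma> r (c *\<^sub>R x) = c *\<^sub>R dil \<sigma> r x"
  by (simp add: dil_def vec_eq_iff algebra_simps)
lemma dil_zero: "dil \<sigma> r 0 = 0"
  by (simp add: dil_def vec_eq_iff)
lemma dil_sum: "finite A \<Longrightarrow> dil \<sigma> r (sum f A) = (\<Sum>i\<in>A. dil \<sigma> r (f i))"
  by (induct A rule: finite_induct) (simp_all add: dil_zero dil_add)

lemma nb_dil: "nested_bracket br (dil \<sigma> r X) (dil \<sigma> r Y) w = dil \<sigma> r (nested_bracket br X Y w)"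
  by (induct w rule: induct_list012) (auto simp: dil_zero dil_br)

lemma jac2: "br X (br Y z) - br Y (br X z) = br (br X Y) z"
proof -
  have "br X (br Y z) + br Y (br z X) + br z (br X Y) = 0" by (rule jacobi)
  then show ?thesis by (simp add: antisym[of z X] antisym[of z "br X Y"] rneg algebra_simps)
qed

definition rho :: "real^'n \<Rightarrow> 'n endo" where
  "rho X = Abs_endo (\<lambda>p. (br X (fst p) - snd p *\<^sub>R Dv \<sigma> X, 0))"

lemma app_rho: "app (rho X) p = (br X (fst p) - snd p *\<^sub>R Dv \<sigma> X, 0)"
proof -
  have lin: "linear (\<lambda>p::(real^'n) \<times> real. (br X (fst p) - snd p *\<^sub>R Dv \<sigma> X, 0))"
    by (simp add: linear_iff radd rmul algebra_simps scaleR_add_left scaleR_diff_right)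
  have "app (Abs_endo (\<lambda>p::(real^'n) \<times> real. (br X (fst p) - snd p *\<^sub>R Dv \<sigma> X, 0))) =
     (\<lambda>p. (br X (fst p) - snd p *\<^sub>R Dv \<sigma> X, 0))" by (rule Abs_endo_inverse) (simp add: lin)
  then show ?thesis by (simp add: rho_def)
qed

lemma rho_br: "rho (br X Y) = rho X * rho Y - rho Y * rho X"
proof (rule endo_eqI)
  fix p :: "(real^'n) \<times> real"
  have d: "Dv \<sigma> (br X Y) = br X (Dv \<sigma> Y) - br Y (Dv \<sigma> X)"
    by (simp add: Dv_br antisym[of "Dv \<sigma> X" Y])
  show "app (rho (br X Y)) p = app (rho X * rho Y - rho Y * rho X) p"
    by (simp add: app_rho rsub rmul d jac2[symmetric, of X Y "fst p"] algebra_simps)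
qed

lemma rho_add: "rho (X + Y) = rho X + rho Y"
  by (rule endo_eqI) (simp add: app_rho ladd Dv_def vec_eq_iff algebra_simps)

lemma rho_scaleR: "rho (c *\<^sub>R X) = c *\<^sub>R rho X"
  by (rule endo_eqI) (simp add: app_rho lmul Dv_def vec_eq_iff algebra_simps)

lemma rho_zero: "rho 0 = 0"
  by (rule endo_eqI) (simp add: app_rho lzero Dv_def vec_eq_iff zero_prod_def)

lemma rho_sum: "finite A \<Longrightarrow> rho (sum f A) = (\<Sum>i\<in>A. rho (f i))"
  by (induct A rule: finite_induct) (simp_all add: rho_zero rho_add)

lemma rho_inj: "rho X = rho Y \<Longrightarrow> X = Y"
proof -
  assume "rho X = rho Y"
  then have "app (rho X) (0, 1) = app (rho Y) (0, 1)" by simp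
  then have "Dv \<sigma> X = Dv \<sigma> Y" by (simp add: app_rho rzero)
  then have "real (\<sigma> i) * X $ i = real (\<sigma> i) * Y $ i" for i by (simp add: Dv_def vec_eq_iff)
  moreover have "real (\<sigma> i) \<noteq> 0" for i using sig1[of i] by simp
  ultimately have "X $ i = Y $ i" for i by (metis mult_cancel_left)
  then show "X = Y" by (simp add: vec_eq_iff)
qed

definition Fl :: "nat \<Rightarrow> ((real^'n) \<times> real) set" where
  "Fl l = {p. (l \<ge> 1 \<longrightarrow> snd p = 0) \<and> fst p \<in> Vge \<sigma> l}"

lemma rho_Fl: "p \<in> Fl l \<Longrightarrow> app (rho X) p \<in> Fl (Suc l)"
proof -
  assume p: "p \<in> Fl l"
  show ?thesis
  proof (cases "l = 0")
    case True
    then show ?thesis using Vge_1 by (simp add: Fl_def app_rho)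
  next
    case False
    then have "snd p = 0" "fst p \<in> Vge \<sigma> l" using p by (auto simp: Fl_def)
    then show ?thesis using br_Vge[of "fst p" l X] by (simp add: Fl_def app_rho)
  qed
qed

lemma pwe_Fl: "(\<And>a. \<beta> a \<in> range rho) \<Longrightarrow> app (pwe \<beta> w) p \<in> Fl (length w)"
proof (induct w)
  case Nil then show ?case by (simp add: Fl_def Vge_def)
next
  case (Cons a w)
  then obtain X where "\<beta> a = rho X" by blast
  then show ?case using rho_Fl[OF Cons.hyps[OF Cons.prems]] by simp
qed

lemma Fl_big: "l > mstep \<Longrightarrow> p \<in> Fl l \<Longrightarrow> p = 0"
  using Vge_big[of l "fst p"] by (cases p) (auto simp: Fl_def zero_prod_def)

lemma nilp_rho: "(\<And>a. \<beta> a \<in> range rho) \<Longrightarrow> nilp \<beta> mstep"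
  unfolding nilp_def
proof (intro allI impI)
  fix w :: "bool list" assume b: "\<And>a. \<beta> a \<in> range rho" and w: "mstep < length w"
  show "pwe \<beta> w = 0"
    by (rule endo_eqI) (use Fl_big[OF w pwe_Fl[OF b]] in simp)
qed

end

context carnot
begin

lemma nb_zero: "length w > mstep \<Longrightarrow> nested_bracket br X Y w = 0"
  using nb_Vge[of w X Y] Vge_big[of "length w"] by (cases "w = []") auto

lemma mult_sum: "carnot_mult br \<sigma> X Y = (\<Sum>w\<in>W mstep. (coef ZZ w / real (length w)) *\<^sub>R nested_bracket br X Y w)"
  unfolding carnot_mult_def bch_def mstep_def[symmetric]
  by (rule bch_sum_identity) (rule nb_zero)

definition bof :: "real^'n \<Rightarrow> real^'n \<Rightarrow> bool \<Rightarrow> 'n endo" where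
  "bof X Y = (\<lambda>a. if a then rho X else rho Y)"

lemma bof_range: "bof X Y a \<in> range rho" by (simp add: bof_def)

lemma nilp_bof: "nilp (bof X Y) mstep" by (rule nilp_rho) (rule bof_range)

lemma rho_nb: "rho (nested_bracket br X Y w) = nestc (bof X Y) w"
  by (induct w rule: induct_list012) (simp_all add: rho_zero rho_br bof_def)

lemma rho_mult: "rho (carnot_mult br \<sigma> X Y) = ev (bof X Y) mstep ZZ"
  by (simp add: mult_sum rho_sum rho_scaleR rho_nb ev_ZZ[OF nilp_bof mstep_ge1])

lemma expm_rho_mult: "expm mstep (rho (carnot_mult br \<sigma> X Y)) = expm mstep (rho X) * expm mstep (rho Y)"
  using expm_ev_ZZ[OF nilp_bof mstep_ge1, of X Y] by (simp add: rho_mult bof_def)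

lemma expm_rho_inj: "expm mstep (rho X) = expm mstep (rho Y) \<Longrightarrow> X = Y"
proof -
  assume e: "expm mstep (rho X) = expm mstep (rho Y)"
  have n: "nilp (\<lambda>_. rho Z) mstep" for Z by (rule nilp_rho) simp
  have "rho X = evm mstep (expm mstep (rho X) - 1) (fps_ln 1)"
    using expm_inj_aux[OF n mstep_ge1] by simp
  also have "\<dots> = evm mstep (expm mstep (rho Y) - 1) (fps_ln 1)" by (simp add: e)
  also have "\<dots> = rho Y" using expm_inj_aux[OF n mstep_ge1] by simp
  finally show "X = Y" by (rule rho_inj)
qed

lemma mult_assoc: "carnot_mult br \<sigma> (carnot_mult br \<sigma> X Y) Z = carnot_mult br \<sigma> X (carnot_mult br \<sigma> Y Z)"
  by (rule expm_rho_inj) (simp add: expm_rho_mult mult.assoc)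

lemma mult_zero_right: "carnot_mult br \<sigma> X 0 = X"
  by (rule expm_rho_inj) (simp add: expm_rho_mult rho_zero expm_0)

lemma mult_one_param: "carnot_mult br \<sigma> (c *\<^sub>R U) (d *\<^sub>R U) = (c + d) *\<^sub>R U"
proof (rule expm_rho_inj)
  have n: "nilp (\<lambda>_. rho U) mstep" by (rule nilp_rho) simp
  show "expm mstep (rho (carnot_mult br \<sigma> (c *\<^sub>R U) (d *\<^sub>R U))) = expm mstep (rho ((c + d) *\<^sub>R U))"
    using expm_add_scaled[OF n mstep_ge1, of c d] by (simp add: expm_rho_mult rho_scaleR)
qed

lemma mult_dil: "carnot_mult br \<sigma> (dil \<sigma> r X) (dil \<sigma> r Y) = dil \<sigma> r (carnot_mult br \<sigma> X Y)"
  by (simp add: mult_sum nb_dil dil_sum dil_scaleR)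

lemma coef_ZZ_single: "coef ZZ [a] = 1"
proof -
  have "coef ZZ [a] = (\<Sum>k\<le>1. fps_nth (fps_ln 1) k * coef ((EE - 1) ^ k) [a])"
    by (simp add: ZZ_def lns_def coef_evf)
  also have "\<dots> = coef EE [a]" by (simp add: fps_ln_nth)
  also have "\<dots> = 1"
  proof (cases a)
    case True
    then have "[a] = blk 1 0" by (simp add: blk_def)
    then show ?thesis by (simp add: coef_EE_blk)
  next
    case False
    then have "[a] = blk 0 1" by (simp add: blk_def)
    then show ?thesis by (simp add: coef_EE_blk)
  qed
  finally show ?thesis .
qed

lemma mult_comp1:
  assumes j: "\<sigma> j = 1"
  shows "(carnot_mult br \<sigma> X Y) $ j = X $ j + Y $ j"
proof -
  have z: "(nested_bracket br X Y w) $ j = 0" if "length w \<ge> 2" for w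
  proof -
    have "nested_bracket br X Y w \<in> Vge \<sigma> (length w)" using that by (intro nb_Vge) auto
    then show ?thesis using that j by (auto simp: Vge_def)
  qed
  have "(carnot_mult br \<sigma> X Y) $ j = (\<Sum>w\<in>W mstep. (coef ZZ w / real (length w)) * (nested_bracket br X Y w) $ j)"
    by (simp add: mult_sum sum_component)
  also have "\<dots> = (\<Sum>w\<in>{[True], [False]}. (coef ZZ w / real (length w)) * (nested_bracket br X Y w) $ j)"
  proof (rule sum.mono_neutral_right)
    show "{[True], [False]} \<subseteq> W mstep" using mstep_ge1 by auto
  next
    show "\<forall>w\<in>W mstep - {[True], [False]}. coef ZZ w / real (length w) * nested_bracket br X Y w $ j = 0"
    proof
      fix w assume w: "w \<in> W mstep - {[True], [False]}"
      show "coef ZZ w / real (length w) * nested_bracket br X Y w $ j = 0"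
      proof (cases "length w \<ge> 2")
        case True then show ?thesis by (simp add: z)
      next
        case False
        then have "w = [] \<or> (\<exists>a. w = [a])" by (cases w; cases "tl w") auto
        then show ?thesis
        proof
          assume "w = []" then show ?thesis by simp
        next
          assume "\<exists>a. w = [a]" then obtain a where "w = [a]" by blast
          with w show ?thesis by (cases a) auto
        qed
      qed
    qed
  qed simp
  also have "\<dots> = X $ j + Y $ j" by (simp add: coef_ZZ_single)
  finally show ?thesis .
qed

end

theorem mainTheorem13:
  fixes br :: "real^'n \<Rightarrow> real^'n \<Rightarrow> real^'n"
    and \<sigma> :: "'n::finite \<Rightarrow> nat"
    and j :: 'n
  assumes "stratified_lie_algebra br \<sigma>"
    and "\<sigma> j = 1"
  shows "(\<forall>x (r::real). r > 0 \<longrightarrow> Pr br \<sigma> j (dil \<sigma> r x) = dil \<sigma> r (Pr br \<sigma> j x))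
       \<and> (\<forall>x y. Pr br \<sigma> j (carnot_mult br \<sigma> x y) =
            carnot_mult br \<sigma>
              (carnot_mult br \<sigma>
                 (carnot_mult br \<sigma> (Pr br \<sigma> j x) (exp_dir j (x $ j)))
                 (Pr br \<sigma> j y))
              (exp_dir j (- (x $ j))))"
proof -
  interpret carnot br \<sigma> by (rule carnot.intro) (rule assms(1))
  let ?m = "carnot_mult br \<sigma>"
  have ej: "exp_dir j t $ j = t" for t by (simp add: exp_dir_def axis_def)
  have e_add: "?m (exp_dir j s) (exp_dir j t) = exp_dir j (s + t)" for s t
    using mult_one_param[of s "axis j 1" t] by (simp add: exp_dir_def)
  have e0: "exp_dir j 0 = 0" by (simp add: exp_dir_def)
  have cancel: "?m (?m q (exp_dir j t)) (exp_dir j (- t)) = q" for q t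
    by (simp add: mult_assoc e_add e0 mult_zero_right)
  have cancel2: "?m (?m q (exp_dir j (- t))) (exp_dir j t) = q" for q t
    by (simp add: mult_assoc e_add e0 mult_zero_right)
  have Pr_eq: "Pr br \<sigma> j x = ?m x (exp_dir j (- x $ j))" for x
  proof -
    let ?p = "?m x (exp_dir j (- x $ j))"
    have p1: "?p \<in> Pi_plane j" using mult_comp1[OF assms(2)] ej by (simp add: Pi_plane_def)
    have p2: "x = ?m ?p (exp_dir j (x $ j))" by (simp only: cancel2)
    have uniq: "q = ?p" if "q \<in> Pi_plane j" "x = ?m q (exp_dir j (x $ j))" for q
    proof -
      have "?p = ?m (?m q (exp_dir j (x $ j))) (exp_dir j (- x $ j))"
        by (rule arg_cong[where f="\<lambda>z. ?m z (exp_dir j (- x $ j))", OF that(2)])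
      also have "\<dots> = q" by (rule cancel)
      finally show ?thesis by simp
    qed
    show ?thesis unfolding Pr_def
    proof (rule the_equality)
      show "?p \<in> Pi_plane j \<and> x = ?m ?p (exp_dir j (x $ j))" using p1 p2 by (rule conjI)
    next
      fix q assume "q \<in> Pi_plane j \<and> x = ?m q (exp_dir j (x $ j))"
      then show "q = ?p" using uniq by blast
    qed
  qed
  have x_eq: "?m (Pr br \<sigma> j x) (exp_dir j (x $ j)) = x" for x
    by (simp only: Pr_eq cancel2)
  have dil_e: "dil \<sigma> r (exp_dir j t) = exp_dir j (r * t)" for r t
    by (simp add: dil_def exp_dir_def vec_eq_iff axis_def assms(2))
  have dil_j: "(dil \<sigma> r x) $ j = r * x $ j" for r x by (simp add: dil_def assms(2))
  show ?thesis
  proof (intro conjI allI impI)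
    fix x and r :: real
    have "Pr br \<sigma> j (dil \<sigma> r x) = ?m (dil \<sigma> r x) (exp_dir j (r * (- x $ j)))"
      by (simp add: Pr_eq dil_j)
    also have "\<dots> = ?m (dil \<sigma> r x) (dil \<sigma> r (exp_dir j (- x $ j)))" by (simp add: dil_e)
    also have "\<dots> = dil \<sigma> r (Pr br \<sigma> j x)" by (simp add: mult_dil Pr_eq)
    finally show "Pr br \<sigma> j (dil \<sigma> r x) = dil \<sigma> r (Pr br \<sigma> j x)" .
  next
    fix x y
    have "?m (?m (?m (Pr br \<sigma> j x) (exp_dir j (x $ j))) (Pr br \<sigma> j y)) (exp_dir j (- (x $ j)))
        = ?m (?m x (?m y (exp_dir j (- y $ j)))) (exp_dir j (- (x $ j)))"
      by (simp only: x_eq Pr_eq[of y])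
    also have "\<dots> = ?m (?m x y) (?m (exp_dir j (- y $ j)) (exp_dir j (- (x $ j))))"
      by (simp only: mult_assoc)
    also have "\<dots> = ?m (?m x y) (exp_dir j (- ((?m x y) $ j)))"
      by (simp add: e_add mult_comp1[OF assms(2)] add.commute)
    also have "\<dots> = Pr br \<sigma> j (?m x y)" by (simp only: Pr_eq)
    finally show "Pr br \<sigma> j (?m x y) = ?m (?m (?m (Pr br \<sigma> j x) (exp_dir j (x $ j))) (Pr br \<sigma> j y)) (exp_dir j (- (x $ j)))"
      by simp
  qed
qed

end
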